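(* Let $v,a,b,c\in\mathbb{C}$ with $a\neq0$, $b\neq0$, $\Re(v)<4$, $\Re(c)>0$, and $\Re(vc+a+b)>0$, $\Re(vc+a-b)>0$, $\Re(vc-a+b)>0$, $\Re(vc-a-b)>0$. Put $\sigma_3=\frac v2-\frac{a}{2c}-\frac{b}{2c}$, $\sigma_4=\frac v2-\frac{a}{2c}+\frac{b}{2c}$, $\sigma_5=\frac v2+\frac{a}{2c}+\frac{b}{2c}$, $\sigma_6=\frac v2+\frac{a}{2c}-\frac{b}{2c}$, and $P=(vc-a-b)(vc+a+b)(vc-a+b)(vc+a-b)=\{(vc)^2-(a+b)^2\}\{(vc)^2-(a-b)^2\}$. Assume $\frac v2\notin\mathbb{Z}_0^-$ and $1+\sigma_j\notin\mathbb{Z}_0^-$ for $j=3,4,5,6$. Then $$ {}_6F_5\!\left(\begin{matrix}v,\ 1+\frac v2,\ \sigma_3,\ \sigma_5,\ \sigma_4,\ \sigma_6\\ \frac v2,\ 1+\sigma_3,\ 1+\sigma_5,\ 1+\sigma_4,\ 1+\sigma_6\end{matrix};\,-1\right) =\frac{P}{16\,v\,a\,b\,c^{2}\,\Gamma(v)}\Big[\Gamma(\sigma_5)\Gamma(\sigma_3)-\Gamma(\sigma_6)\Gamma(\sigma_4)\Big]. $$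
   Context: $\mathbb{Z}_0^-=\{0,-1,-2,\dots\}$. The Pochhammer symbol is $(\lambda)_0=1$, $(\lambda)_n=\lambda(\lambda+1)\cdots(\lambda+n-1)$ for $n\ge1$. The generalized hypergeometric series is ${}_pF_q\!\left(\begin{matrix}\alpha_1,\dots,\alpha_p\\ \beta_1,\dots,\beta_q\end{matrix};z\right)=\sum_{n=0}^\infty\frac{(\alpha_1)_n\cdots(\alpha_p)_n}{(\beta_1)_n\cdots(\beta_q)_n}\frac{z^n}{n!}$ (with no $\beta_j\in\mathbb{Z}_0^-$); when $p=q+1$ and $|z|=1$, $z\ne 1$, it converges if $\Re(\sum\beta_j-\sum\alpha_i)>-1$, and for $z=1$ it converges if $\Re(\sum\beta_j-\sum\alpha_i)>0$. $\Gamma$ is Euler's gamma function. *)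

theory Defs
  imports "HOL-Analysis.Analysis"
begin

definition hyp_term :: "complex list \<Rightarrow> complex list \<Rightarrow> complex \<Rightarrow> nat \<Rightarrow> complex" where
  "hyp_term as bs z n =
     (\<Prod>a\<leftarrow>as. pochhammer a n) / (\<Prod>b\<leftarrow>bs. pochhammer b n) * z ^ n / of_nat (fact n)"

definition hypergeom :: "complex list \<Rightarrow> complex list \<Rightarrow> complex \<Rightarrow> complex" where
  "hypergeom as bs z = (\<Sum>n. hyp_term as bs z n)"

end

theory Submission
  imports Defs
begin

lemma rpf:
  fixes z :: complex
  assumes "\<And>k. k \<le> N \<Longrightarrow> z + of_nat k \<noteq> 0"
  shows "fact N / pochhammer z (Suc N) = (\<Sum>k\<le>N. (-1)^k * of_nat (N choose k) / (z + of_nat k))"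
  using assms
proof (induction N arbitrary: z)
  case 0 then show ?case by simp
next
  case (Suc N)
  have h1: "fact N / pochhammer z (Suc N) = (\<Sum>k\<le>N. (-1)^k * of_nat (N choose k) / (z + of_nat k))"
    using Suc.prems by (intro Suc.IH) auto
  have h2: "fact N / pochhammer (z+1) (Suc N) = (\<Sum>k\<le>N. (-1)^k * of_nat (N choose k) / (z + 1 + of_nat k))"
    using Suc.prems[of "Suc _"] by (intro Suc.IH) (auto simp: add.assoc)
  have nz: "pochhammer z (Suc (Suc N)) \<noteq> 0" using Suc.prems
    by (auto simp: pochhammer_eq_0_iff) (metis add.commute add_uminus_conv_diff diff_self less_Suc_eq_le)
  have "fact (Suc N) / pochhammer z (Suc (Suc N)) = fact N / pochhammer z (Suc N) - fact N / pochhammer (z+1) (Suc N)"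
  proof -
    have e1: "pochhammer z (Suc (Suc N)) = pochhammer z (Suc N) * (z + of_nat (Suc N))"
      by (rule pochhammer_Suc)
    have e2: "pochhammer z (Suc (Suc N)) = z * pochhammer (z+1) (Suc N)"
      by (rule pochhammer_rec)
    have a1: "pochhammer z (Suc N) \<noteq> 0" "pochhammer (z+1) (Suc N) \<noteq> 0" "z \<noteq> 0" "z + of_nat (Suc N) \<noteq> 0"
      using nz e1 e2 by auto
    have e3: "pochhammer (z+1) (Suc N) = pochhammer z (Suc N) * (z + of_nat (Suc N)) / z"
      using e1 e2 a1 by (simp add: field_simps)
    have alg: "\<And>p f w::complex. p \<noteq> 0 \<Longrightarrow> z \<noteq> 0 \<Longrightarrow> z + w + 1 \<noteq> 0 \<Longrightarrow>
        (w + 1) * f / (p * (z + (w+1))) = f / p - f / (p * (z + (w+1)) / z)"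
    proof -
      fix p f w :: complex assume a: "p \<noteq> 0" "z \<noteq> 0" "z + w + 1 \<noteq> 0"
      have b: "z + (w+1) \<noteq> 0" using a by (simp add: add_ac)
      have "f / p - f / (p * (z + (w+1)) / z) = f * (z + (w+1)) / (p * (z + (w+1))) - f * z / (p * (z + (w+1)))"
        using a b by simp
      also have "\<dots> = (w + 1) * f / (p * (z + (w+1)))" by (simp add: diff_divide_distrib[symmetric] algebra_simps)
      finally show "(w + 1) * f / (p * (z + (w+1))) = f / p - f / (p * (z + (w+1)) / z)" by simp
    qed
    show ?thesis unfolding e1 e3 using a1 alg[of "pochhammer z (Suc N)" "of_nat N" "fact N"]
      by (simp add: fact_Suc add_ac)
  qed
  also have "\<dots> = (\<Sum>k\<le>Suc N. (-1)^k * of_nat (Suc N choose k) / (z + of_nat k))"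
  proof -
    have "(\<Sum>k\<le>Suc N. (-1)^k * of_nat (Suc N choose k) / (z + of_nat k)) =
          (\<Sum>k\<le>Suc N. (-1)^k * of_nat (N choose k) / (z + of_nat k)) +
          (\<Sum>k\<le>Suc N. (-1)^k * of_nat (if k = 0 then 0 else (N choose (k - 1))) / (z + of_nat k))"
    proof (subst sum.distrib[symmetric], rule sum.cong)
      fix k assume "k \<in> {..Suc N}"
      show "(-1)^k * of_nat (Suc N choose k) / (z + of_nat k) = (-1)^k * of_nat (N choose k) / (z + of_nat k) +
          (-1)^k * of_nat (if k = 0 then 0 else (N choose (k - 1))) / (z + of_nat k)"
        by (cases k) (simp_all add: add_divide_distrib[symmetric] algebra_simps)
    qed simp
    also have "(\<Sum>k\<le>Suc N. (-1)^k * of_nat (N choose k) / (z + of_nat k)) = (\<Sum>k\<le>N. (-1)^k * of_nat (N choose k) / (z + of_nat k))"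
      by simp
    also have "(\<Sum>k\<le>Suc N. (-1)^k * of_nat (if k = 0 then 0 else (N choose (k - 1))) / (z + of_nat k))
       = - (\<Sum>k\<le>N. (-1)^k * of_nat (N choose k) / (z + 1 + of_nat k))"
      by (subst sum.atMost_Suc_shift) (simp add: sum_negf[symmetric] add_ac)
    finally show ?thesis using h1 h2 by simp
  qed
  finally show ?case .
qed

lemma np_aux: "v + of_nat n = (0::complex) \<Longrightarrow> v = - of_nat n"
  by (simp add: eq_neg_iff_add_eq_0)

lemma np_ne: "(v::complex) \<notin> \<int>\<^sub>\<le>\<^sub>0 \<Longrightarrow> v + of_nat n \<noteq> 0"
  using np_aux[of v n] by auto

lemma np_aux2: "a + of_nat j = - of_nat k \<Longrightarrow> a + of_nat (j+k) = (0::complex)"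
proof -
  assume h: "a + of_nat j = - of_nat k"
  have "a + of_nat (j+k) = (a + of_nat j) + of_nat k" by (simp add: add.assoc)
  also have "\<dots> = 0" using h by simp
  finally show ?thesis .
qed

lemma pf2: "X \<noteq> 0 \<Longrightarrow> Y \<noteq> 0 \<Longrightarrow> X + Y \<noteq> 0 \<Longrightarrow> 1 / (X * Y) = (1/X + 1/Y) / (X + (Y::complex))"
proof -
  assume a: "X \<noteq> 0" "Y \<noteq> 0" "X + Y \<noteq> 0"
  have "1/X + 1/Y = (X+Y)/(X*Y)" using a by (simp add: add_divide_distrib[symmetric] field_simps)
  thus ?thesis using a by simp
qed

definition RR :: "nat \<Rightarrow> complex \<Rightarrow> complex" where
  "RR N z = fact N / pochhammer z (Suc N)"

lemma RR_sum:
  assumes "\<And>k. z + of_nat k \<noteq> 0"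
  shows "RR N z = (\<Sum>k\<le>N. (-1)^k * of_nat (N choose k) / (z + of_nat k))"
  unfolding RR_def using assms by (intro rpf) auto

lemma RR_prod:
  fixes s t v :: complex
  assumes st: "s + t = v" and v: "v \<notin> \<int>\<^sub>\<le>\<^sub>0"
    and s: "\<And>k. s + of_nat k \<noteq> 0" and t: "\<And>k. t + of_nat k \<noteq> 0"
  shows "RR N s * RR N t = (\<Sum>j\<le>N. (-1)^j * of_nat (N choose j) * RR N (v + of_nat j) *
            (1/(s + of_nat j) + 1/(t + of_nat j)))"
proof -
  define A where "A = (\<lambda>j. (-1)^j * of_nat (N choose j) :: complex)"
  have vjk: "v + of_nat j + of_nat k \<noteq> 0" for j k
  proof
    assume "v + of_nat j + of_nat k = 0"
    hence "v = - of_nat (j+k)" using np_aux[of v "j+k"] by (simp add: add.assoc)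
    with v show False by (metis minus_of_nat_in_nonpos_Ints)
  qed
  have vj: "v + of_nat j + of_nat k \<noteq> 0" for j k using vjk .
  have key: "1 / ((s + of_nat j) * (t + of_nat k)) = (1/(s + of_nat j) + 1/(t + of_nat k)) / (v + of_nat j + of_nat k)" for j k
  proof -
    have a: "s + of_nat j \<noteq> 0" "t + of_nat k \<noteq> 0" "s + t + of_nat j + of_nat k \<noteq> 0" using s t vjk st by auto
    have "1 / ((s + of_nat j) * (t + of_nat k)) = (1/(s + of_nat j) + 1/(t + of_nat k)) / ((s + of_nat j) + (t + of_nat k))"
      using a by (intro pf2) (auto simp: add_ac)
    hence "1 / ((s + of_nat j) * (t + of_nat k)) = (1/(s + of_nat j) + 1/(t + of_nat k)) / (s + t + of_nat j + of_nat k)"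
      by (simp add: add_ac)
    thus ?thesis using st by simp
  qed
  have "RR N s * RR N t = (\<Sum>j\<le>N. \<Sum>k\<le>N. A j / (s + of_nat j) * (A k / (t + of_nat k)))"
    unfolding RR_sum[OF s] RR_sum[OF t] A_def by (simp add: sum_product)
  also have "\<dots> = (\<Sum>j\<le>N. \<Sum>k\<le>N. A j * A k * (1/(s + of_nat j)) / (v + of_nat j + of_nat k))
       + (\<Sum>j\<le>N. \<Sum>k\<le>N. A j * A k * (1/(t + of_nat k)) / (v + of_nat j + of_nat k))"
  proof -
    have "A j / (s + of_nat j) * (A k / (t + of_nat k)) = A j * A k * (1/(s + of_nat j)) / (v + of_nat j + of_nat k)
       + A j * A k * (1/(t + of_nat k)) / (v + of_nat j + of_nat k)" for j k
    proof -
      have "A j / (s + of_nat j) * (A k / (t + of_nat k)) = A j * A k * (1 / ((s + of_nat j) * (t + of_nat k)))"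
        by simp
      also have "\<dots> = A j * A k * ((1/(s + of_nat j) + 1/(t + of_nat k)) / (v + of_nat j + of_nat k))"
        by (simp only: key)
      finally show ?thesis by (simp add: add_divide_distrib algebra_simps)
    qed
    thus ?thesis by (simp add: sum.distrib)
  qed
  also have "(\<Sum>j\<le>N. \<Sum>k\<le>N. A j * A k * (1/(s + of_nat j)) / (v + of_nat j + of_nat k))
      = (\<Sum>j\<le>N. A j * RR N (v + of_nat j) * (1/(s + of_nat j)))"
  proof (rule sum.cong[OF refl])
    fix j assume "j \<in> {..N}"
    have hR: "RR N (v + of_nat j) = (\<Sum>k\<le>N. A k / (v + of_nat j + of_nat k))"
      unfolding A_def using vjk[of j] by (subst RR_sum) auto
    show "(\<Sum>k\<le>N. A j * A k * (1/(s + of_nat j)) / (v + of_nat j + of_nat k)) = A j * RR N (v + of_nat j) * (1/(s + of_nat j))"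
      unfolding hR sum_distrib_left sum_distrib_right by (rule sum.cong) (simp_all add: divide_inverse mult_ac)
  qed
  also have "(\<Sum>j\<le>N. \<Sum>k\<le>N. A j * A k * (1/(t + of_nat k)) / (v + of_nat j + of_nat k))
      = (\<Sum>k\<le>N. A k * RR N (v + of_nat k) * (1/(t + of_nat k)))"
  proof (subst sum.swap, rule sum.cong[OF refl])
    fix k assume "k \<in> {..N}"
    have hR: "RR N (v + of_nat k) = (\<Sum>j\<le>N. A j / (v + of_nat k + of_nat j))"
      unfolding A_def using vjk[of k] by (subst RR_sum) (auto simp: add_ac)
    show "(\<Sum>j\<le>N. A j * A k * (1/(t + of_nat k)) / (v + of_nat j + of_nat k)) = A k * RR N (v + of_nat k) * (1/(t + of_nat k))"
      unfolding hR sum_distrib_left sum_distrib_right by (rule sum.cong) (simp_all add: divide_inverse mult_ac add_ac)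
  qed
  finally show ?thesis unfolding A_def by (simp add: sum.distrib[symmetric] algebra_simps)
qed

lemma alg_e: fixes sg Q fj fN pA pB pC pD :: complex
  assumes "pA * pD = pC * pB" "pB \<noteq> 0" "pD \<noteq> 0" "fj \<noteq> 0" "fN \<noteq> 0"
  shows "sg * (Q / fj) * (fN / pB) * pA / fN = (sg * pC / fj) * (Q / pD)"
proof -
  have "pA = pC * pB / pD" using assms by (simp add: field_simps)
  thus ?thesis using assms by (simp add: field_simps)
qed

definition rho :: "complex \<Rightarrow> nat \<Rightarrow> nat \<Rightarrow> complex" where
  "rho v N j = (\<Prod>i<j. (of_nat N - of_nat i) / (v + of_nat N + 1 + of_nat i))"

definition uu :: "complex \<Rightarrow> nat \<Rightarrow> complex" where
  "uu v j = (-1)^j * pochhammer v j / fact j"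

lemma e_eq:
  fixes v :: complex
  assumes v: "v \<notin> \<int>\<^sub>\<le>\<^sub>0" and j: "j \<le> N"
  shows "(-1)^j * of_nat (N choose j) * RR N (v + of_nat j) * pochhammer v (Suc N) / fact N = uu v j * rho v N j"
proof -
  have nz: "pochhammer (v + of_nat j) (Suc N) \<noteq> 0"
  proof
    assume "pochhammer (v + of_nat j) (Suc N) = 0"
    then obtain k where "v + of_nat j = - of_nat k" by (auto simp: pochhammer_eq_0_iff)
    hence "v + of_nat (j + k) = 0" by (rule np_aux2)
    with np_ne[OF v] show False by blast
  qed
  have nz2: "pochhammer (v + of_nat (Suc N)) j \<noteq> 0"
  proof
    assume "pochhammer (v + of_nat (Suc N)) j = 0"
    then obtain k where "v + of_nat (Suc N) = - of_nat k" by (auto simp: pochhammer_eq_0_iff)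
    hence "v + of_nat (Suc N + k) = 0" by (rule np_aux2)
    with np_ne[OF v] show False by blast
  qed
  have p1: "pochhammer v (Suc N) * pochhammer (v + of_nat (Suc N)) j = pochhammer v j * pochhammer (v + of_nat j) (Suc N)"
    using pochhammer_product'[of v "Suc N" j] pochhammer_product'[of v j "Suc N"] by (simp add: add_ac)
  have c1: "(of_nat (N choose j) :: complex) = (\<Prod>i<j. (of_nat N - of_nat i)) / fact j"
    unfolding binomial_gbinomial gbinomial_prod_rev by (simp add: atLeast0LessThan)
  have c2: "pochhammer (v + of_nat (Suc N)) j = (\<Prod>i<j. (v + of_nat N + 1 + of_nat i))"
    unfolding pochhammer_prod by (simp add: atLeast0LessThan add_ac)
  have r: "rho v N j = (\<Prod>i<j. (of_nat N - of_nat i)) / pochhammer (v + of_nat (Suc N)) j"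
    unfolding rho_def c2 by (simp add: prod_dividef)
  show ?thesis unfolding RR_def uu_def r c1
    by (rule alg_e[OF p1 nz nz2]) simp_all
qed

definition kf :: "complex \<Rightarrow> complex \<Rightarrow> complex \<Rightarrow> complex" where
  "kf \<alpha> \<beta> X = 2 * X * (\<beta> - \<alpha>) / ((X^2 + \<alpha>) * (X^2 + \<beta>))"

lemma norm_sq_plus_ge:
  fixes X \<alpha> :: complex
  assumes "norm X ^ 2 \<ge> 2 * norm \<alpha>"
  shows "norm (X^2 + \<alpha>) \<ge> norm X ^ 2 / 2"
proof -
  have "norm (X^2) \<le> norm (X^2 + \<alpha>) + norm (X^2 - (X^2 + \<alpha>))" by (rule norm_triangle_sub)
  hence "norm X ^ 2 \<le> norm (X^2 + \<alpha>) + norm \<alpha>" by (simp add: norm_power)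
  thus ?thesis using assms by linarith
qed

lemma kf_bound:
  fixes X \<alpha> \<beta> :: complex
  assumes X1: "norm X \<ge> 1" and a: "norm X ^ 2 \<ge> 2 * norm \<alpha>" and b: "norm X ^ 2 \<ge> 2 * norm \<beta>"
  shows "norm (kf \<alpha> \<beta> X) \<le> 8 * norm (\<beta> - \<alpha>) / norm X ^ 3"
proof -
  have A: "norm (X^2 + \<alpha>) \<ge> norm X ^ 2 / 2" by (rule norm_sq_plus_ge[OF a])
  have B: "norm (X^2 + \<beta>) \<ge> norm X ^ 2 / 2" by (rule norm_sq_plus_ge[OF b])
  have pos: "norm X > 0" using X1 by linarith
  have D: "norm ((X^2 + \<alpha>) * (X^2 + \<beta>)) \<ge> norm X ^ 4 / 4"
  proof -
    have "norm X ^ 4 / 4 = (norm X ^ 2 / 2) * (norm X ^ 2 / 2)" by (simp add: power2_eq_square power4_eq_xxxx)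
    also have "\<dots> \<le> norm (X^2 + \<alpha>) * norm (X^2 + \<beta>)"
      using A B by (intro mult_mono) auto
    finally show ?thesis by (simp add: norm_mult)
  qed
  have D0: "norm X ^ 4 / 4 > 0" using pos by simp
  have "norm (kf \<alpha> \<beta> X) = 2 * norm X * norm (\<beta> - \<alpha>) / norm ((X^2 + \<alpha>) * (X^2 + \<beta>))"
    unfolding kf_def by (simp add: norm_mult norm_divide)
  also have "\<dots> \<le> 2 * norm X * norm (\<beta> - \<alpha>) / (norm X ^ 4 / 4)"
  proof (rule divide_left_mono[OF D])
    have "norm ((X^2 + \<alpha>) * (X^2 + \<beta>)) > 0" using D D0 by linarith
    thus "0 < norm ((X^2 + \<alpha>) * (X^2 + \<beta>)) * (norm X ^ 4 / 4)" using D0 by simp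
  qed simp
  also have "\<dots> = 8 * norm (\<beta> - \<alpha>) / norm X ^ 3"
    using pos by (simp add: field_simps power_Suc power2_eq_square power3_eq_cube power4_eq_xxxx)
  finally show ?thesis .
qed

lemma kf_diff_eq:
  fixes X \<alpha> \<beta> :: complex
  assumes "(X^2 + \<alpha>) \<noteq> 0" "(X^2 + \<beta>) \<noteq> 0" "((X+1)^2 + \<alpha>) \<noteq> 0" "((X+1)^2 + \<beta>) \<noteq> 0"
  shows "kf \<alpha> \<beta> X - kf \<alpha> \<beta> (X+1) = 2 * (\<beta> - \<alpha>) *
     (X * (X+1) * (X^2 + X * (X+1) + (X+1)^2) + (\<alpha> + \<beta>) * X * (X+1) - \<alpha> * \<beta>) /
     ((X^2 + \<alpha>) * (X^2 + \<beta>) * ((X+1)^2 + \<alpha>) * ((X+1)^2 + \<beta>))"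
proof -
  have nz1: "(X^2 + \<alpha>) * (X^2 + \<beta>) \<noteq> 0" and nz2: "((X+1)^2 + \<alpha>) * ((X+1)^2 + \<beta>) \<noteq> 0"
    using assms by auto
  have "kf \<alpha> \<beta> X - kf \<alpha> \<beta> (X+1) = (2 * X * (\<beta> - \<alpha>) * (((X+1)^2 + \<alpha>) * ((X+1)^2 + \<beta>))
        - 2 * (X+1) * (\<beta> - \<alpha>) * ((X^2 + \<alpha>) * (X^2 + \<beta>))) /
        ((X^2 + \<alpha>) * (X^2 + \<beta>) * (((X+1)^2 + \<alpha>) * ((X+1)^2 + \<beta>)))"
    unfolding kf_def by (rule diff_frac_eq[OF nz1 nz2])
  also have "2 * X * (\<beta> - \<alpha>) * (((X+1)^2 + \<alpha>) * ((X+1)^2 + \<beta>))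
        - 2 * (X+1) * (\<beta> - \<alpha>) * ((X^2 + \<alpha>) * (X^2 + \<beta>)) = 2 * (\<beta> - \<alpha>) *
     (X * (X+1) * (X^2 + X * (X+1) + (X+1)^2) + (\<alpha> + \<beta>) * X * (X+1) - \<alpha> * \<beta>)"
    by algebra
  finally show ?thesis by (simp add: mult_ac)
qed

lemma kf_diff_bound:
  fixes X \<alpha> \<beta> :: complex
  assumes X1: "norm X \<ge> 1" and a: "norm X ^ 2 \<ge> 2 * norm \<alpha>" and b: "norm X ^ 2 \<ge> 2 * norm \<beta>"
    and ReX: "Re X \<ge> 0"
  shows "norm (kf \<alpha> \<beta> X - kf \<alpha> \<beta> (X+1)) \<le>
     32 * norm (\<beta> - \<alpha>) * (14 + 2 * norm (\<alpha> + \<beta>) + norm (\<alpha> * \<beta>)) / norm X ^ 4"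
proof -
  define Y where "Y = X + 1"
  have pos: "norm X > 0" using X1 by linarith
  have YX: "norm Y \<ge> norm X"
  proof -
    have e1: "norm (X+1) ^ 2 = (Re X + 1)^2 + (Im X)^2" by (simp add: cmod_power2)
    have e2: "norm X ^ 2 = (Re X)^2 + (Im X)^2" by (simp add: cmod_power2)
    have "norm X ^ 2 \<le> norm (X+1) ^ 2" unfolding e1 e2 using ReX by (simp add: power2_eq_square algebra_simps)
    thus ?thesis unfolding Y_def by (rule power2_le_imp_le) simp
  qed
  have Y2: "norm Y \<le> 2 * norm X"
    using norm_triangle_ineq[of X 1] X1 unfolding Y_def by simp
  have XY2: "norm X^2 \<le> norm Y^2" by (rule power_mono[OF YX]) simp
  have aY: "norm Y ^ 2 \<ge> 2 * norm \<alpha>" and bY: "norm Y ^ 2 \<ge> 2 * norm \<beta>"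
    using a b XY2 by linarith+
  have A: "norm (X^2 + \<alpha>) \<ge> norm X ^ 2 / 2" by (rule norm_sq_plus_ge[OF a])
  have B: "norm (X^2 + \<beta>) \<ge> norm X ^ 2 / 2" by (rule norm_sq_plus_ge[OF b])
  have C: "norm (Y^2 + \<alpha>) \<ge> norm X ^ 2 / 2"
    using norm_sq_plus_ge[OF aY] XY2 by linarith
  have D: "norm (Y^2 + \<beta>) \<ge> norm X ^ 2 / 2"
    using norm_sq_plus_ge[OF bY] XY2 by linarith
  have hpos: "norm X ^ 2 / 2 > 0" using pos by simp
  have nz: "(X^2 + \<alpha>) \<noteq> 0" "(X^2 + \<beta>) \<noteq> 0" "(Y^2 + \<alpha>) \<noteq> 0" "(Y^2 + \<beta>) \<noteq> 0"
    using A B C D hpos by auto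
  have den: "norm ((X^2 + \<alpha>) * (X^2 + \<beta>) * (Y^2 + \<alpha>) * (Y^2 + \<beta>)) \<ge> norm X ^ 8 / 16"
  proof -
    have "norm X ^ 8 / 16 = (norm X ^ 2 / 2) * (norm X ^ 2 / 2) * (norm X ^ 2 / 2) * (norm X ^ 2 / 2)"
      by (simp add: numeral_eq_Suc)
    also have "\<dots> \<le> norm (X^2 + \<alpha>) * norm (X^2 + \<beta>) * norm (Y^2 + \<alpha>) * norm (Y^2 + \<beta>)"
      using A B C D hpos by (intro mult_mono) auto
    finally show ?thesis by (simp add: norm_mult)
  qed
  define Q where "Q = 14 + 2 * norm (\<alpha> + \<beta>) + norm (\<alpha> * \<beta>)"
  have num: "norm (X * Y * (X^2 + X * Y + Y^2) + (\<alpha> + \<beta>) * X * Y - \<alpha> * \<beta>) \<le> Q * norm X ^ 4"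
  proof -
    have n1: "norm (X * Y * (X^2 + X * Y + Y^2)) \<le> 14 * norm X ^ 4"
    proof -
      have "norm (X^2 + X * Y + Y^2) \<le> norm X ^ 2 + norm X * norm Y + norm Y ^ 2"
      proof -
        have "norm (X^2 + X * Y + Y^2) \<le> norm (X^2 + X * Y) + norm (Y^2)" by (rule norm_triangle_ineq)
        also have "norm (X^2 + X * Y) \<le> norm (X^2) + norm (X * Y)" by (rule norm_triangle_ineq)
        finally show ?thesis by (simp add: norm_mult norm_power)
      qed
      also have "\<dots> \<le> norm X ^ 2 + norm X * (2 * norm X) + (2 * norm X) ^ 2"
        using Y2 pos by (intro add_mono mult_left_mono power_mono) auto
      also have "\<dots> = 7 * norm X ^ 2" by (simp add: power2_eq_square)
      finally have e: "norm (X^2 + X * Y + Y^2) \<le> 7 * norm X ^ 2" .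
      have "norm (X * Y * (X^2 + X * Y + Y^2)) = norm X * norm Y * norm (X^2 + X * Y + Y^2)"
        by (simp add: norm_mult)
      also have "\<dots> \<le> norm X * (2 * norm X) * (7 * norm X ^ 2)"
        using Y2 e by (intro mult_mono) auto
      also have "\<dots> = 14 * norm X ^ 4" by (simp add: power2_eq_square power4_eq_xxxx)
      finally show ?thesis .
    qed
    have n2: "norm ((\<alpha> + \<beta>) * X * Y) \<le> 2 * norm (\<alpha> + \<beta>) * norm X ^ 4"
    proof -
      have "norm ((\<alpha> + \<beta>) * X * Y) = norm (\<alpha> + \<beta>) * norm X * norm Y" by (simp add: norm_mult)
      also have "\<dots> \<le> norm (\<alpha> + \<beta>) * norm X * (2 * norm X)"
        using Y2 by (intro mult_left_mono) auto
      also have "\<dots> \<le> norm (\<alpha> + \<beta>) * (2 * norm X ^ 4)"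
      proof -
        have "norm X * (2 * norm X) = 2 * norm X ^ 2" by (simp add: power2_eq_square)
        also have "\<dots> \<le> 2 * norm X ^ 4" using X1 by (intro mult_left_mono power_increasing) auto
        finally show ?thesis by (simp add: mult.assoc mult_left_mono)
      qed
      finally show ?thesis by simp
    qed
    have n3: "norm (\<alpha> * \<beta>) \<le> norm (\<alpha> * \<beta>) * norm X ^ 4"
    proof -
      have "1 \<le> norm X ^ 4" using X1 by (rule one_le_power)
      hence "norm (\<alpha> * \<beta>) * 1 \<le> norm (\<alpha> * \<beta>) * norm X ^ 4" by (intro mult_left_mono) auto
      thus ?thesis by simp
    qed
    have t: "norm (X * Y * (X^2 + X * Y + Y^2) + (\<alpha> + \<beta>) * X * Y - \<alpha> * \<beta>) \<le>
          norm (X * Y * (X^2 + X * Y + Y^2) + (\<alpha> + \<beta>) * X * Y) + norm (\<alpha> * \<beta>)"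
      by (rule norm_triangle_ineq4)
    have t2: "norm (X * Y * (X^2 + X * Y + Y^2) + (\<alpha> + \<beta>) * X * Y) \<le>
          norm (X * Y * (X^2 + X * Y + Y^2)) + norm ((\<alpha> + \<beta>) * X * Y)"
      by (rule norm_triangle_ineq)
    have q: "Q * norm X ^ 4 = 14 * norm X ^ 4 + 2 * norm (\<alpha> + \<beta>) * norm X ^ 4 + norm (\<alpha> * \<beta>) * norm X ^ 4"
      unfolding Q_def by (simp add: distrib_right)
    show ?thesis using t t2 n1 n2 n3 q by linarith
  qed
  have "kf \<alpha> \<beta> X - kf \<alpha> \<beta> (X+1) = 2 * (\<beta> - \<alpha>) *
     (X * Y * (X^2 + X * Y + Y^2) + (\<alpha> + \<beta>) * X * Y - \<alpha> * \<beta>) /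
     ((X^2 + \<alpha>) * (X^2 + \<beta>) * (Y^2 + \<alpha>) * (Y^2 + \<beta>))"
    unfolding Y_def by (rule kf_diff_eq) (use nz in \<open>simp_all add: Y_def\<close>)
  hence "norm (kf \<alpha> \<beta> X - kf \<alpha> \<beta> (X+1)) = 2 * norm (\<beta> - \<alpha>) *
     norm (X * Y * (X^2 + X * Y + Y^2) + (\<alpha> + \<beta>) * X * Y - \<alpha> * \<beta>) /
     norm ((X^2 + \<alpha>) * (X^2 + \<beta>) * (Y^2 + \<alpha>) * (Y^2 + \<beta>))"
    by (simp only: norm_mult norm_divide) simp
  also have "\<dots> \<le> 2 * norm (\<beta> - \<alpha>) * (Q * norm X ^ 4) / (norm X ^ 8 / 16)"
  proof -
    have Qpos: "Q \<ge> 0" unfolding Q_def by simp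
    show ?thesis using num den pos Qpos by (intro frac_le mult_left_mono) auto
  qed
  also have "\<dots> = 32 * norm (\<beta> - \<alpha>) * Q / norm X ^ 4"
  proof -
    have "norm X ^ 8 = norm X^4 * norm X^4" by (simp add: numeral_eq_Suc)
    thus ?thesis using pos by (simp add: field_simps)
  qed
  finally show ?thesis unfolding Q_def .
qed

lemma rho_Suc: "rho v N (Suc j) = rho v N j * ((of_nat N - of_nat j) / (v + of_nat N + 1 + of_nat j))"
  unfolding rho_def by simp

lemma rho_0 [simp]: "rho v N 0 = 1" unfolding rho_def by simp

lemma rho_zero: "N < j \<Longrightarrow> rho v N j = 0"
  unfolding rho_def by (rule prod_zero) (auto intro!: bexI[of _ N])

lemma uu_Suc: "uu v (Suc j) = uu v j * (- (v + of_nat j) / (of_nat j + 1))"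
  unfolding uu_def by (simp add: pochhammer_Suc fact_Suc field_simps)

lemma uu_0 [simp]: "uu v 0 = 1" unfolding uu_def by simp

lemma rho_lim: "(\<lambda>N. rho v N j) \<longlonglongrightarrow> 1"
proof -
  have f: "(\<lambda>N. (of_nat N - of_nat i) / (v + of_nat N + 1 + of_nat i)) \<longlonglongrightarrow> (1::complex)" for i
  proof -
    have "(\<lambda>N. (1 - of_nat i / of_nat N) / (1 + (v + 1 + of_nat i) / of_nat N)) \<longlonglongrightarrow> (1 - 0) / (1 + 0 :: complex)"
      by (intro tendsto_intros lim_const_over_n) simp
    moreover have "eventually (\<lambda>N. (1 - of_nat i / of_nat N) / (1 + (v + 1 + of_nat i) / of_nat N) =
        (of_nat N - of_nat i) / (v + of_nat N + 1 + of_nat i)) sequentially"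
      using eventually_gt_at_top[of 0]
    proof eventually_elim
      case (elim N)
      have n: "(of_nat N :: complex) \<noteq> 0" using elim by simp
      have e1: "1 - of_nat i / of_nat N = (of_nat N - of_nat i) / (of_nat N :: complex)" using n by (simp add: field_simps)
      have e2: "1 + (v + 1 + of_nat i) / of_nat N = (v + of_nat N + 1 + of_nat i) / (of_nat N :: complex)" using n by (simp add: field_simps)
      show ?case unfolding e1 e2 using n by simp
    qed
    ultimately show ?thesis by (simp add: Lim_transform_eventually)
  qed
  have "(\<lambda>N. \<Prod>i<j. (of_nat N - of_nat i) / (v + of_nat N + 1 + of_nat i)) \<longlonglongrightarrow> (\<Prod>i<j. (1::complex))"
    by (intro tendsto_prod f)
  thus ?thesis unfolding rho_def by simp
qed

lemma norm_re_ge: "norm (v + of_nat N + 1 + of_nat i) \<ge> Re v + real N + 1 + real i"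
  using complex_Re_le_cmod[of "v + of_nat N + 1 + of_nat i"] by simp

lemma norm_nat_diff: "norm (of_nat N - of_nat i :: complex) = \<bar>real N - real i\<bar>"
proof -
  have "(of_nat N - of_nat i :: complex) = of_real (real N - real i)" by simp
  thus ?thesis by (simp only: norm_of_real)
qed

lemma factor_le1:
  assumes "Re v \<ge> -1"
  shows "norm ((of_nat N - of_nat i) / (v + of_nat N + 1 + of_nat i)) \<le> 1"
proof -
  have d: "norm (v + of_nat N + 1 + of_nat i) \<ge> Re v + real N + 1 + real i" by (rule norm_re_ge)
  have "\<bar>real N - real i\<bar> \<le> Re v + real N + 1 + real i" using assms by linarith
  hence "norm (of_nat N - of_nat i :: complex) \<le> norm (v + of_nat N + 1 + of_nat i)"
    using d norm_nat_diff[of N i] by linarith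
  thus ?thesis by (simp add: norm_divide divide_le_eq_1)
qed

lemma rho_le1:
  assumes "Re v \<ge> -1"
  shows "norm (rho v N j) \<le> 1"
  unfolding rho_def prod_norm[symmetric]
  by (rule prod_le_1) (use factor_le1[OF assms] in auto)

lemma factor_le_lin:
  assumes "Re v \<ge> -1" "i \<le> N" "N \<ge> 1"
  shows "norm ((of_nat N - of_nat i) / (v + of_nat N + 1 + of_nat i)) \<le> 1 - real i / real N"
proof -
  have d: "norm (v + of_nat N + 1 + of_nat i) \<ge> real N" using norm_re_ge[of v N i] assms by linarith
  have Npos: "real N > 0" using assms by simp
  have "norm ((of_nat N - of_nat i) / (v + of_nat N + 1 + of_nat i)) = (real N - real i) / norm (v + of_nat N + 1 + of_nat i)"
    using norm_nat_diff[of N i] assms by (simp add: norm_divide)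
  also have "\<dots> \<le> (real N - real i) / real N"
  proof (rule divide_left_mono)
    show "0 < norm (v + of_nat N + 1 + of_nat i) * real N" using d Npos by (intro mult_pos_pos) auto
  qed (use d assms in auto)
  also have "\<dots> = 1 - real i / real N" using Npos by (simp add: field_simps)
  finally show ?thesis .
qed

lemma rho_weier:
  assumes "Re v \<ge> -1" "j \<le> N" "N \<ge> 1"
  shows "norm (rho v N j) * (1 + real j * (real j - 1) / (2 * real N)) \<le> 1"
  using assms(2)
proof (induction j)
  case 0 then show ?case by simp
next
  case (Suc j)
  define p where "p = norm (rho v N j)"
  define a where "a = real j / real N"
  define S where "S = real j * (real j - 1) / (2 * real N)"
  have Npos: "real N > 0" using assms by simp
  have IH: "p * (1 + S) \<le> 1" using Suc by (simp add: p_def S_def)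
  have p0: "p \<ge> 0" by (simp add: p_def)
  have a0: "a \<ge> 0" and a1: "a \<le> 1" using Suc.prems Npos by (auto simp: a_def field_simps)
  have S0: "S \<ge> 0"
  proof (cases j)
    case 0 then show ?thesis by (simp add: S_def)
  next
    case (Suc m) then show ?thesis using Npos by (simp add: S_def)
  qed
  have step: "norm (rho v N (Suc j)) \<le> p * (1 - a)"
    unfolding rho_Suc norm_mult p_def a_def
    using factor_le_lin[OF assms(1) _ assms(3), of j] Suc.prems by (intro mult_left_mono) auto
  have S': "real (Suc j) * (real (Suc j) - 1) / (2 * real N) = S + a"
    using Npos by (simp add: S_def a_def field_simps)
  have "norm (rho v N (Suc j)) * (1 + (S + a)) \<le> p * (1 - a) * (1 + (S + a))"
    using step S0 a0 by (intro mult_right_mono) auto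
  also have "\<dots> = p * (1 + S - a * S - a * a)" by (simp add: algebra_simps)
  also have "\<dots> \<le> p * (1 + S)"
  proof -
    have h1: "a * S \<ge> 0" "a * a \<ge> 0" using a0 S0 by auto
    have h: "1 + S - a*S - a*a \<le> 1 + S" using h1 by linarith
    show ?thesis by (rule mult_left_mono[OF h p0])
  qed
  also have "\<dots> \<le> 1" by (rule IH)
  finally show ?case using S' by simp
qed

lemma rho_decay:
  assumes "Re v \<ge> -1" "2 \<le> j"
  shows "norm (rho v N j) * (real j + 1) / real N \<le> 3 / (real j - 1)"
proof (cases "j \<le> N")
  case False
  hence "rho v N j = 0" by (intro rho_zero) simp
  thus ?thesis using assms by simp
next
  case True
  have N1: "N \<ge> 1" using True assms by simp
  have Npos: "real N > 0" using N1 by simp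
  have j1: "real j - 1 > 0" using assms by simp
  have w: "norm (rho v N j) * (1 + real j * (real j - 1) / (2 * real N)) \<le> 1"
    by (rule rho_weier[OF assms(1) True N1])
  have "norm (rho v N j) * (real j * (real j - 1) / (2 * real N)) \<le> 1"
    using w by (simp add: algebra_simps) (smt (verit) norm_ge_zero)
  hence w2: "norm (rho v N j) / real N \<le> 2 / (real j * (real j - 1))"
    using Npos j1 assms by (simp add: field_simps)
  have "norm (rho v N j) * (real j + 1) / real N = (norm (rho v N j) / real N) * (real j + 1)" by simp
  also have "\<dots> \<le> 2 / (real j * (real j - 1)) * (real j + 1)"
    using w2 by (intro mult_right_mono) auto
  also have "\<dots> \<le> 3 / (real j - 1)"
  proof -
    have "(real j - 1) * (real j - 2) \<ge> 0" using assms by (intro mult_nonneg_nonneg) auto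
    hence h: "real j * 3 \<le> 2 + real j * real j" "2 * (real j + 1) \<le> 3 * real j" using assms by (auto simp: algebra_simps)
    show ?thesis using j1 assms h by (simp add: field_simps)
  qed
  finally show ?thesis .
qed

lemma factor_le2:
  assumes "real N \<ge> 2 * \<bar>Re v\<bar> + 2"
  shows "norm ((of_nat N - of_nat i) / (v + of_nat N + 1 + of_nat i)) \<le> (if real i \<ge> \<bar>Re v\<bar> then 1 else 2)"
proof -
  have d: "norm (v + of_nat N + 1 + of_nat i) \<ge> Re v + real N + 1 + real i" by (rule norm_re_ge)
  have dpos: "Re v + real N + 1 + real i > 0" using assms by linarith
  have n: "norm (of_nat N - of_nat i :: complex) = \<bar>real N - real i\<bar>" by (rule norm_nat_diff)
  show ?thesis
  proof (cases "real i \<ge> \<bar>Re v\<bar>")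
    case True
    have "\<bar>real N - real i\<bar> \<le> Re v + real N + 1 + real i" using True assms by linarith
    hence "norm (of_nat N - of_nat i :: complex) \<le> norm (v + of_nat N + 1 + of_nat i)" using d n by linarith
    thus ?thesis using True by (simp add: norm_divide divide_le_eq_1)
  next
    case False
    have "\<bar>real N - real i\<bar> \<le> 2 * (Re v + real N + 1 + real i)" using False assms
      by (cases "real i \<le> real N"; cases "Re v \<ge> 0") (simp_all add: abs_if)
    moreover have "2 * (Re v + real N + 1 + real i) \<le> 2 * norm (v + of_nat N + 1 + of_nat i)" using d by simp
    ultimately have "\<bar>real N - real i\<bar> \<le> 2 * norm (v + of_nat N + 1 + of_nat i)" by (rule order_trans)
    hence "norm (of_nat N - of_nat i :: complex) \<le> 2 * norm (v + of_nat N + 1 + of_nat i)" using n by simp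
    moreover have "norm (v + of_nat N + 1 + of_nat i) > 0" using d dpos by linarith
    ultimately show ?thesis using False by (simp add: norm_divide divide_le_eq)
  qed
qed

lemma rho_bounded:
  "\<exists>B N0. \<forall>N\<ge>N0. \<forall>j. norm (rho v N j) \<le> B"
proof -
  define L where "L = nat \<lceil>\<bar>Re v\<bar>\<rceil>"
  define N0 where "N0 = nat \<lceil>2 * \<bar>Re v\<bar> + 2\<rceil>"
  have "norm (rho v N j) \<le> 2 ^ min j L" if N: "N \<ge> N0" for N j
  proof (induction j)
    case 0 then show ?case by simp
  next
    case (Suc j)
    have NN: "real N \<ge> 2 * \<bar>Re v\<bar> + 2" using N unfolding N0_def by linarith
    have f: "norm ((of_nat N - of_nat j) / (v + of_nat N + 1 + of_nat j)) \<le> (if real j \<ge> \<bar>Re v\<bar> then 1 else 2)"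
      by (rule factor_le2[OF NN])
    show ?case
    proof (cases "j < L")
      case True
      hence "min (Suc j) L = Suc (min j L)" by simp
      moreover have "norm ((of_nat N - of_nat j) / (v + of_nat N + 1 + of_nat j)) \<le> 2"
        using f by (auto split: if_splits)
      moreover have "norm (rho v N j) * norm ((of_nat N - of_nat j) / (v + of_nat N + 1 + of_nat j)) \<le> 2 ^ min j L * 2"
        using Suc.IH calculation(2) by (intro mult_mono) auto
      ultimately show ?thesis unfolding rho_Suc norm_mult by simp
    next
      case False
      hence "real j \<ge> \<bar>Re v\<bar>" unfolding L_def by linarith
      hence f1: "norm ((of_nat N - of_nat j) / (v + of_nat N + 1 + of_nat j)) \<le> 1" using f by simp
      have "min (Suc j) L = min j L" using False by simp
      thus ?thesis unfolding rho_Suc norm_mult using Suc.IH f1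
        by (metis mult.right_neutral mult_mono' norm_ge_zero order_trans mult_left_mono)
    qed
  qed
  moreover have "(2::real) ^ min j L \<le> 2 ^ L" for j by (intro power_increasing) auto
  ultimately show ?thesis by (meson order_trans)
qed

lemma uu_bound:
  "\<exists>M. \<forall>j\<ge>2. norm (uu v j) \<le> M * (real j - 1) powr (Re v - 1)"
proof -
  have "Bseq (rGamma_series v)" using rGamma_series_LIMSEQ[of v] by (intro convergent_imp_Bseq convergentI)
  then obtain K where K: "K > 0" "\<And>n. norm (rGamma_series v n) \<le> K" unfolding Bseq_def by blast
  have "norm (uu v (Suc n)) \<le> K * real n powr (Re v - 1)" if n: "n \<ge> 1" for n
  proof -
    define E where "E = exp (v * of_real (ln (of_nat n)))"
    have E0: "E \<noteq> 0" unfolding E_def by simp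
    have nE: "norm E = real n powr Re v"
      unfolding E_def norm_exp_eq_Re using n by (simp add: powr_def)
    have poch: "pochhammer v (Suc n) = rGamma_series v n * (fact n * E)"
      unfolding rGamma_series_def E_def using E0 by (simp add: E_def)
    have pb: "norm (pochhammer v (Suc n)) \<le> K * (fact n * real n powr Re v)"
    proof -
      have nf: "norm (fact n :: complex) = fact n" by (metis norm_of_nat of_nat_fact)
      show ?thesis unfolding poch norm_mult nE nf using K(2)[of n] by (intro mult_right_mono) auto
    qed
    have ue: "norm (uu v (Suc n)) = norm (pochhammer v (Suc n)) / fact (Suc n)"
    proof -
      have nf: "norm (fact (Suc n) :: complex) = fact (Suc n)" by (metis norm_of_nat of_nat_fact)
      show ?thesis unfolding uu_def norm_divide norm_mult nf by (simp add: norm_power)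
    qed
    have "norm (uu v (Suc n)) \<le> K * (fact n * real n powr Re v) / fact (Suc n)"
      unfolding ue by (rule divide_right_mono[OF pb]) simp
    also have "\<dots> = K * real n powr Re v / (real n + 1)"
    proof -
      have f: "(fact (Suc n)::real) = fact n * (real n + 1)" by (simp add: fact_Suc algebra_simps)
      have "fact n > (0::real)" by simp
      hence "K * (fact n * real n powr Re v) / (fact n * (real n + 1)) = K * real n powr Re v / (real n + 1)"
        by (simp add: mult.left_commute[of K])
      thus ?thesis unfolding f .
    qed
    also have "\<dots> \<le> K * real n powr Re v / real n"
      using n K by (intro divide_left_mono mult_nonneg_nonneg) auto
    also have "\<dots> = K * real n powr (Re v - 1)"
      using n by (simp add: powr_diff)
    finally show ?thesis .
  qed
  hence "\<forall>j\<ge>2. norm (uu v j) \<le> K * (real j - 1) powr (Re v - 1)"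
  proof (intro allI impI)
    fix j :: nat assume j: "j \<ge> 2"
    then obtain n where jn: "j = Suc n" and "n \<ge> 1" by (cases j) auto
    thus "norm (uu v j) \<le> K * (real j - 1) powr (Re v - 1)"
      using \<open>\<And>n. n \<ge> 1 \<Longrightarrow> _\<close>[of n] by simp
  qed
  thus ?thesis by blast
qed

definition KK :: "complex \<Rightarrow> complex \<Rightarrow> complex \<Rightarrow> complex \<Rightarrow> nat \<Rightarrow> complex" where
  "KK s t r w j = 1/(s + of_nat j) + 1/(t + of_nat j) - 1/(r + of_nat j) - 1/(w + of_nat j)"

lemma pair_X:
  fixes s t v :: complex
  assumes "s + t = v" "s + of_nat j \<noteq> 0" "t + of_nat j \<noteq> 0"
  shows "1/(s + of_nat j) + 1/(t + of_nat j) = 2 * (of_nat j + v/2) / ((of_nat j + v/2)^2 + (s*t - v^2/4))"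
proof -
  have e: "(of_nat j + v/2)^2 + (s*t - v^2/4) = (s + of_nat j) * (t + of_nat j)"
    unfolding assms(1)[symmetric] by (simp add: power2_eq_square field_simps)
  have e2: "2 * (of_nat j + v/2) = (s + of_nat j) + (t + of_nat j)" using assms(1) by simp
  show ?thesis unfolding e e2 using assms(2,3) by (simp add: field_simps)
qed

lemma kf_alt:
  assumes "X^2 + \<alpha> \<noteq> 0" "X^2 + \<beta> \<noteq> 0"
  shows "kf \<alpha> \<beta> X = 2 * X / (X^2 + \<alpha>) - 2 * X / (X^2 + \<beta>)"
  unfolding kf_def using assms by (simp add: field_simps)

lemma KK_kf:
  fixes s t r w v :: complex
  assumes st: "s + t = v" and rw: "r + w = v"
    and nz: "s + of_nat j \<noteq> 0" "t + of_nat j \<noteq> 0" "r + of_nat j \<noteq> 0" "w + of_nat j \<noteq> 0"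
  shows "KK s t r w j = kf (s*t - v^2/4) (r*w - v^2/4) (of_nat j + v/2)"
proof -
  have e1: "(of_nat j + v/2)^2 + (s*t - v^2/4) = (s + of_nat j) * (t + of_nat j)"
    unfolding st[symmetric] by (simp add: power2_eq_square field_simps)
  have e2: "(of_nat j + v/2)^2 + (r*w - v^2/4) = (r + of_nat j) * (w + of_nat j)"
    unfolding rw[symmetric] by (simp add: power2_eq_square field_simps)
  have "kf (s*t - v^2/4) (r*w - v^2/4) (of_nat j + v/2) =
      2 * (of_nat j + v/2) / ((of_nat j + v/2)^2 + (s*t - v^2/4)) - 2 * (of_nat j + v/2) / ((of_nat j + v/2)^2 + (r*w - v^2/4))"
    by (rule kf_alt) (use nz e1 e2 in auto)
  also have "\<dots> = KK s t r w j"
    unfolding KK_def pair_X[OF st nz(1,2), symmetric] pair_X[OF rw nz(3,4), symmetric] by simp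
  finally show ?thesis by simp
qed

lemma div_pow_anti:
  fixes a y z :: real
  assumes "0 \<le> a" "0 < y" "y \<le> z"
  shows "a / z ^ k \<le> a / y ^ k"
  using assms by (intro divide_left_mono power_mono mult_pos_pos) (auto intro: zero_less_power order_less_le_trans)

lemma X_facts:
  fixes v \<alpha> \<beta> :: complex and j :: nat
  assumes j: "real j \<ge> 3 + \<bar>Re v\<bar> + 8 * norm \<alpha> + 8 * norm \<beta>"
  defines "X \<equiv> of_nat j + v/2"
  shows "Re X \<ge> 0" "(real j - 1) / 2 \<le> norm X" "norm X \<ge> 1" "norm X ^ 2 \<ge> 2 * norm \<alpha>" "norm X ^ 2 \<ge> 2 * norm \<beta>"
    "real j - 1 > 0"
proof -
  have ReX: "2 * Re X = 2 * real j + Re v" unfolding X_def by simp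
  note aux = abs_ge_minus_self[of "Re v"] norm_ge_zero[of \<alpha>] norm_ge_zero[of \<beta>]
  have R2: "2 * Re X \<ge> 0" using ReX j aux by linarith
  thus "Re X \<ge> 0" by simp
  have n0: "real j - 1 \<le> 2 * Re X" using ReX j aux by linarith
  have n: "real j - 1 \<le> 2 * norm X" using n0 complex_Re_le_cmod[of X] by linarith
  thus "(real j - 1) / 2 \<le> norm X" by (simp add: field_simps)
  show n1: "norm X \<ge> 1" using n j aux by linarith
  show "real j - 1 > 0" using j aux by linarith
  have sq: "norm X ^ 2 \<ge> norm X"
  proof -
    have "norm X * 1 \<le> norm X * norm X" using n1 by (intro mult_left_mono) auto
    thus ?thesis by (simp add: power2_eq_square)
  qed
  show "norm X ^ 2 \<ge> 2 * norm \<alpha>" using sq n j aux by linarith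
  show "norm X ^ 2 \<ge> 2 * norm \<beta>" using sq n j aux by linarith
qed

lemma KK_bounds:
  fixes s t r w v :: complex
  assumes st: "s + t = v" and rw: "r + w = v"
    and nz: "\<And>k. s + of_nat k \<noteq> 0" "\<And>k. t + of_nat k \<noteq> 0" "\<And>k. r + of_nat k \<noteq> 0" "\<And>k. w + of_nat k \<noteq> 0"
  shows "\<exists>C j1. j1 \<ge> 3 \<and> (\<forall>j\<ge>j1. norm (KK s t r w j) \<le> C / (real j - 1)^3 \<and>
            norm (KK s t r w (Suc j)) \<le> C / (real j - 1)^3 \<and>
            norm (KK s t r w j - KK s t r w (Suc j)) \<le> C / (real j - 1)^4)"
proof -
  define \<alpha> where "\<alpha> = s*t - v^2/4"
  define \<beta> where "\<beta> = r*w - v^2/4"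
  define j1 where "j1 = nat \<lceil>3 + \<bar>Re v\<bar> + 8 * norm \<alpha> + 8 * norm \<beta>\<rceil>"
  define A where "A = 64 * norm (\<beta> - \<alpha>)"
  define B where "B = 512 * norm (\<beta> - \<alpha>) * (14 + 2 * norm (\<alpha> + \<beta>) + norm (\<alpha> * \<beta>))"
  have KKe: "KK s t r w j = kf \<alpha> \<beta> (of_nat j + v/2)" for j
    unfolding \<alpha>_def \<beta>_def by (rule KK_kf[OF st rw nz])
  have A0: "A \<ge> 0" and B0: "B \<ge> 0" unfolding A_def B_def by auto
  have bnd1: "norm (KK s t r w j) \<le> A / (real j - 1)^3" if j: "j \<ge> j1" for j
  proof -
    have jj: "real j \<ge> 3 + \<bar>Re v\<bar> + 8 * norm \<alpha> + 8 * norm \<beta>" using j unfolding j1_def by linarith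
    note XF = X_facts[OF jj]
    have j3: "real j - 1 > 0" using jj abs_ge_minus_self[of "Re v"] norm_ge_zero[of \<alpha>] norm_ge_zero[of \<beta>] by linarith
    have "norm (KK s t r w j) \<le> 8 * norm (\<beta> - \<alpha>) / norm (of_nat j + v/2) ^ 3"
      unfolding KKe by (rule kf_bound[OF XF(3,4,5)])
    also have "\<dots> \<le> 8 * norm (\<beta> - \<alpha>) / ((real j - 1) / 2) ^ 3"
      by (rule div_pow_anti) (use XF in auto)
    also have "\<dots> = A / (real j - 1)^3" unfolding A_def by (simp add: power_divide)
    finally show ?thesis .
  qed
  have bnd3: "norm (KK s t r w j - KK s t r w (Suc j)) \<le> B / (real j - 1)^4" if j: "j \<ge> j1" for j
  proof -
    have jj: "real j \<ge> 3 + \<bar>Re v\<bar> + 8 * norm \<alpha> + 8 * norm \<beta>" using j unfolding j1_def by linarith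
    note XF = X_facts[OF jj]
    have j3: "real j - 1 > 0" using jj abs_ge_minus_self[of "Re v"] norm_ge_zero[of \<alpha>] norm_ge_zero[of \<beta>] by linarith
    have e: "of_nat (Suc j) + v/2 = (of_nat j + v/2) + 1" by simp
    have "norm (KK s t r w j - KK s t r w (Suc j)) \<le>
       32 * norm (\<beta> - \<alpha>) * (14 + 2 * norm (\<alpha> + \<beta>) + norm (\<alpha> * \<beta>)) / norm (of_nat j + v/2) ^ 4"
      unfolding KKe e by (rule kf_diff_bound[OF XF(3,4,5,1)])
    also have "\<dots> \<le> 32 * norm (\<beta> - \<alpha>) * (14 + 2 * norm (\<alpha> + \<beta>) + norm (\<alpha> * \<beta>)) / ((real j - 1) / 2) ^ 4"
      by (rule div_pow_anti) (use XF in auto)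
    also have "\<dots> = B / (real j - 1)^4" unfolding B_def by (simp add: power_divide)
    finally show ?thesis .
  qed
  have bnd2: "norm (KK s t r w (Suc j)) \<le> A / (real j - 1)^3" if j: "j \<ge> j1" for j
  proof -
    have "norm (KK s t r w (Suc j)) \<le> A / (real (Suc j) - 1)^3" using j by (intro bnd1) simp
    also have "\<dots> \<le> A / (real j - 1)^3"
    proof (rule div_pow_anti)
      have jj: "real j \<ge> 3 + \<bar>Re v\<bar> + 8 * norm \<alpha> + 8 * norm \<beta>" using j unfolding j1_def by linarith
      show "0 < real j - 1" using jj abs_ge_minus_self[of "Re v"] norm_ge_zero[of \<alpha>] norm_ge_zero[of \<beta>] by linarith
    qed (use A0 in auto)
    finally show ?thesis .
  qed
  have "real j1 \<ge> 3 + \<bar>Re v\<bar> + 8 * norm \<alpha> + 8 * norm \<beta>" unfolding j1_def by (rule real_nat_ceiling_ge)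
  hence "real j1 \<ge> 3" by (smt (verit) abs_ge_zero norm_ge_zero)
  hence "j1 \<ge> 3" by simp
  moreover have "\<forall>j\<ge>j1. norm (KK s t r w j) \<le> (A + B) / (real j - 1)^3 \<and>
            norm (KK s t r w (Suc j)) \<le> (A + B) / (real j - 1)^3 \<and>
            norm (KK s t r w j - KK s t r w (Suc j)) \<le> (A + B) / (real j - 1)^4"
  proof (intro allI impI conjI)
    fix j assume j: "j \<ge> j1"
    have jp: "real j - 1 > 0" using j \<open>j1 \<ge> 3\<close> by linarith
    have m3: "A / (real j - 1)^3 \<le> (A + B) / (real j - 1)^3" using B0 jp by (intro divide_right_mono) auto
    have m4: "B / (real j - 1)^4 \<le> (A + B) / (real j - 1)^4" using A0 jp by (intro divide_right_mono) auto
    show "norm (KK s t r w j) \<le> (A + B) / (real j - 1)^3" using bnd1[OF j] m3 by linarith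
    show "norm (KK s t r w (Suc j)) \<le> (A + B) / (real j - 1)^3" using bnd2[OF j] m3 by linarith
    show "norm (KK s t r w j - KK s t r w (Suc j)) \<le> (A + B) / (real j - 1)^4" using bnd3[OF j] m4 by linarith
  qed
  ultimately show ?thesis by blast
qed

lemma gs_alg:
  fixes F es et ev ps pt pv :: complex
  assumes "F \<noteq> 0" "es * et = ev" "ev \<noteq> 0" "ps \<noteq> 0" "pt \<noteq> 0"
  shows "(F * es / ps) * (F * et / pt) * (pv / (F * ev)) = (F / ps) * (F / pt) * pv / F"
proof -
  have "es \<noteq> 0" "et \<noteq> 0" using assms by auto
  thus ?thesis using assms by (simp add: field_simps)
qed

lemma W_lim:
  fixes s t v :: complex
  assumes st: "s + t = v" and s: "\<And>k. s + of_nat k \<noteq> 0" and t: "\<And>k. t + of_nat k \<noteq> 0"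
  shows "(\<lambda>N. RR N s * RR N t * pochhammer v (Suc N) / fact N) \<longlonglongrightarrow> Gamma s * Gamma t * rGamma v"
proof -
  have lim: "(\<lambda>N. Gamma_series s N * Gamma_series t N * rGamma_series v N) \<longlonglongrightarrow> Gamma s * Gamma t * rGamma v"
    by (intro tendsto_intros)
  have ps: "pochhammer s (Suc N) \<noteq> 0" for N using s by (auto simp: pochhammer_eq_0_iff) (metis add_eq_0_iff)
  have pt: "pochhammer t (Suc N) \<noteq> 0" for N using t by (auto simp: pochhammer_eq_0_iff) (metis add_eq_0_iff)
  have "Gamma_series s N * Gamma_series t N * rGamma_series v N = RR N s * RR N t * pochhammer v (Suc N) / fact N" for N
  proof -
    define L where "L = (of_real (ln (of_nat N)) :: complex)"
    have e: "exp (s * L) * exp (t * L) = exp (v * L)" unfolding st[symmetric] by (simp add: exp_add[symmetric] algebra_simps)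
    show ?thesis unfolding Gamma_series_def rGamma_series_def RR_def L_def[symmetric]
      using gs_alg[OF _ e _ ps pt, where F = "fact N" and pv = "pochhammer v (Suc N)"] by simp
  qed
  with lim show ?thesis by simp
qed

lemma W_sum:
  fixes s t v :: complex
  assumes st: "s + t = v" and v: "v \<notin> \<int>\<^sub>\<le>\<^sub>0" and s: "\<And>k. s + of_nat k \<noteq> 0" and t: "\<And>k. t + of_nat k \<noteq> 0"
  shows "RR N s * RR N t * pochhammer v (Suc N) / fact N = (\<Sum>j\<le>N. uu v j * rho v N j * (1/(s + of_nat j) + 1/(t + of_nat j)))"
proof -
  have "RR N s * RR N t * pochhammer v (Suc N) / fact N =
     (\<Sum>j\<le>N. ((-1)^j * of_nat (N choose j) * RR N (v + of_nat j) * pochhammer v (Suc N) / fact N) * (1/(s + of_nat j) + 1/(t + of_nat j)))"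
    unfolding RR_prod[OF st v s t] sum_distrib_right sum_divide_distrib
    by (rule sum.cong) (simp_all add: algebra_simps)
  also have "\<dots> = (\<Sum>j\<le>N. uu v j * rho v N j * (1/(s + of_nat j) + 1/(t + of_nat j)))"
    by (rule sum.cong) (simp_all add: e_eq[OF v])
  finally show ?thesis .
qed

lemma fin_lim:
  fixes s t r w v :: complex
  assumes st: "s + t = v" and rw: "r + w = v" and v: "v \<notin> \<int>\<^sub>\<le>\<^sub>0"
    and s: "\<And>k. s + of_nat k \<noteq> 0" and t: "\<And>k. t + of_nat k \<noteq> 0"
    and r: "\<And>k. r + of_nat k \<noteq> 0" and w: "\<And>k. w + of_nat k \<noteq> 0"
  shows "(\<lambda>N. \<Sum>j\<le>N. uu v j * rho v N j * KK s t r w j) \<longlonglongrightarrow> (Gamma s * Gamma t - Gamma r * Gamma w) * rGamma v"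
proof -
  have "(\<lambda>N. RR N s * RR N t * pochhammer v (Suc N) / fact N - RR N r * RR N w * pochhammer v (Suc N) / fact N)
      \<longlonglongrightarrow> Gamma s * Gamma t * rGamma v - Gamma r * Gamma w * rGamma v"
    by (intro tendsto_diff W_lim st rw s t r w)
  also have "(\<lambda>N. RR N s * RR N t * pochhammer v (Suc N) / fact N - RR N r * RR N w * pochhammer v (Suc N) / fact N)
      = (\<lambda>N. \<Sum>j\<le>N. uu v j * rho v N j * KK s t r w j)"
    unfolding W_sum[OF st v s t] W_sum[OF rw v r w] sum_subtractf[symmetric] KK_def
    by (intro ext sum.cong) (simp_all add: algebra_simps)
  finally show ?thesis by (simp add: algebra_simps)
qed

lemma summable_shifted_powr:
  fixes e c :: real
  assumes "e < -1"
  shows "summable (\<lambda>k. c * (real k - 1) powr e)"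
proof -
  have "summable (\<lambda>k. c * (real (k + 1) - 1) powr e)"
    using assms by (simp add: summable_real_powr_iff)
  thus ?thesis by (subst summable_iff_shift[of _ 1, symmetric])
qed

lemma powr_div_pow:
  fixes x e :: real assumes "x > 0"
  shows "x powr e / x ^ n = x powr (e - real n)"
  using assms by (simp add: powr_diff powr_realpow)

lemma a_sum_fin:
  "(\<lambda>k. uu v k * rho v N k * KK s t r w k) sums (\<Sum>j\<le>N. uu v j * rho v N j * KK s t r w j)"
  by (rule sums_finite) (auto simp: rho_zero)

lemma caseA:
  fixes s t r w v :: complex
  assumes st: "s + t = v" and rw: "r + w = v" and v: "v \<notin> \<int>\<^sub>\<le>\<^sub>0"
    and s: "\<And>k. s + of_nat k \<noteq> 0" and t: "\<And>k. t + of_nat k \<noteq> 0"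
    and r: "\<And>k. r + of_nat k \<noteq> 0" and w: "\<And>k. w + of_nat k \<noteq> 0"
    and ReA: "Re v < 3"
  shows "(\<lambda>j. uu v j * KK s t r w j) sums ((Gamma s * Gamma t - Gamma r * Gamma w) * rGamma v)"
proof -
  obtain Mu where Mu: "\<And>j. j \<ge> 2 \<Longrightarrow> norm (uu v j) \<le> Mu * (real j - 1) powr (Re v - 1)"
    using uu_bound[of v] by blast
  obtain B N0 where B: "\<And>N j. N \<ge> N0 \<Longrightarrow> norm (rho v N j) \<le> B"
    using rho_bounded[of v] by blast
  obtain C j1 where j1: "j1 \<ge> 3" and C: "\<And>j. j \<ge> j1 \<Longrightarrow> norm (KK s t r w j) \<le> C / (real j - 1)^3"
    using KK_bounds[OF st rw s t r w] by blast
  define M where "M = (\<lambda>k::nat. Mu * B * C * (real k - 1) powr (Re v - 4))"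
  define a where "a = (\<lambda>k N. uu v k * rho v N k * KK s t r w k)"
  define b where "b = (\<lambda>k. uu v k * KK s t r w k)"
  have lim: "(\<lambda>N. a k N) \<longlonglongrightarrow> b k" for k
  proof -
    have "(\<lambda>N. uu v k * rho v N k * KK s t r w k) \<longlonglongrightarrow> uu v k * 1 * KK s t r w k"
      by (intro tendsto_intros rho_lim)
    thus ?thesis by (simp add: a_def b_def)
  qed
  have bound: "norm (a k N) \<le> M k" if k: "k \<ge> j1" and N: "N \<ge> N0" for k N
  proof -
    have x: "real k - 1 > 0" using k j1 by simp
    have u: "norm (uu v k) \<le> Mu * (real k - 1) powr (Re v - 1)" using k j1 by (intro Mu) simp
    have "norm (a k N) = norm (uu v k) * norm (rho v N k) * norm (KK s t r w k)"
      by (simp add: a_def norm_mult)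
    also have "\<dots> \<le> (Mu * (real k - 1) powr (Re v - 1)) * B * (C / (real k - 1)^3)"
    proof -
      have u0: "Mu * (real k - 1) powr (Re v - 1) \<ge> 0" using u norm_ge_zero[of "uu v k"] by linarith
      have B0: "B \<ge> 0" using B[OF N, of k] norm_ge_zero[of "rho v N k"] by linarith
      show ?thesis using u B[OF N, of k] C[OF k] u0 B0 by (intro mult_mono) auto
    qed
    also have "\<dots> = Mu * B * C * ((real k - 1) powr (Re v - 1) / (real k - 1)^3)" by simp
    also have "\<dots> = M k" unfolding M_def using x by (simp add: powr_div_pow)
    finally show ?thesis .
  qed
  have ev: "eventually (\<lambda>(k, N). norm (a k N) \<le> M k) (at_top \<times>\<^sub>F sequentially)"
    unfolding eventually_prod_sequentially
    by (rule exI[of _ "max j1 N0"]) (auto intro!: bound)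
  have sM: "summable M" unfolding M_def using ReA by (intro summable_shifted_powr) simp
  have T: "((\<lambda>N. suminf (\<lambda>k. a k N)) \<longlongrightarrow> suminf b) sequentially" and sb: "summable (\<lambda>n. norm (b n))"
    using tannerys_theorem[OF lim ev sM] by auto
  have "suminf (\<lambda>k. a k N) = (\<Sum>j\<le>N. uu v j * rho v N j * KK s t r w j)" for N
    unfolding a_def using a_sum_fin by (rule sums_unique[symmetric])
  with T have "(\<lambda>N. \<Sum>j\<le>N. uu v j * rho v N j * KK s t r w j) \<longlonglongrightarrow> suminf b" by simp
  hence "suminf b = (Gamma s * Gamma t - Gamma r * Gamma w) * rGamma v"
    using fin_lim[OF st rw v s t r w] by (rule LIMSEQ_unique)
  moreover have "summable b" using sb by (rule summable_norm_cancel)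
  ultimately show ?thesis unfolding b_def by (metis summable_sums)
qed

lemma theta_alg:
  fixes V Kc Nc :: complex
  assumes "V + Nc + 1 + Kc \<noteq> 0" "Kc + 1 \<noteq> 0"
  shows "1 - (V + Kc) / (Kc + 1) * ((Nc - Kc) / (V + Nc + 1 + Kc)) =
    (Nc * (1 - V) + (2 * Kc^2 + 2 * Kc * (V + 1) + V + 1)) / ((Kc + 1) * (V + Nc + 1 + Kc))"
proof -
  have e1: "(V + Kc) / (Kc + 1) * ((Nc - Kc) / (V + Nc + 1 + Kc)) = ((V + Kc) * (Nc - Kc)) / ((Kc + 1) * (V + Nc + 1 + Kc))"
    by simp
  have e2: "(1::complex) = ((Kc + 1) * (V + Nc + 1 + Kc)) / ((Kc + 1) * (V + Nc + 1 + Kc))"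
    using assms by simp
  have "1 - (V + Kc) / (Kc + 1) * ((Nc - Kc) / (V + Nc + 1 + Kc)) =
     ((Kc + 1) * (V + Nc + 1 + Kc) - (V + Kc) * (Nc - Kc)) / ((Kc + 1) * (V + Nc + 1 + Kc))"
    unfolding e1 by (subst e2) (simp only: diff_divide_distrib)
  also have "(Kc + 1) * (V + Nc + 1 + Kc) - (V + Kc) * (Nc - Kc) = Nc * (1 - V) + (2 * Kc^2 + 2 * Kc * (V + 1) + V + 1)"
    by (simp add: algebra_simps power2_eq_square)
  finally show ?thesis .
qed

lemma P_bound:
  fixes v :: complex
  shows "norm (2 * (of_nat k)^2 + 2 * of_nat k * (v + 1) + v + 1) \<le> (2 + 3 * norm (v + 1)) * (real k + 1)^2"
proof -
  have "norm (2 * (of_nat k)^2 + 2 * of_nat k * (v + 1) + v + 1) \<le> norm (2 * (of_nat k)^2 + 2 * of_nat k * (v + 1)) + norm (v + 1)"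
    using norm_triangle_ineq[of "2 * (of_nat k)^2 + 2 * of_nat k * (v + 1)" "v + 1"] by (simp add: add.assoc)
  also have "norm (2 * (of_nat k)^2 + 2 * of_nat k * (v + 1) :: complex) \<le> 2 * real k ^ 2 + 2 * real k * norm (v + 1)"
    using norm_triangle_ineq[of "2 * (of_nat k)^2 :: complex" "2 * of_nat k * (v + 1)"] by (simp add: norm_mult norm_power)
  finally have a: "norm (2 * (of_nat k)^2 + 2 * of_nat k * (v + 1) + v + 1) \<le> 2 * real k ^ 2 + 2 * real k * norm (v + 1) + norm (v + 1)" by simp
  define n where "n = norm (v + 1)"
  define Q where "Q = (real k + 1)^2"
  have k1: "real k ^ 2 \<le> Q" "real k \<le> Q" "1 \<le> Q"
    by (auto simp: Q_def power2_eq_square algebra_simps)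
  have n0: "n \<ge> 0" by (simp add: n_def)
  have b1: "2 * real k * n \<le> 2 * (Q * n)"
    using mult_right_mono[OF k1(2) n0] by simp
  have b2: "n \<le> Q * n" using mult_right_mono[OF k1(3) n0] by simp
  have eq: "(2 + 3 * n) * Q = 2 * Q + 3 * (Q * n)" by (simp add: algebra_simps)
  have a': "norm (2 * (of_nat k)^2 + 2 * of_nat k * (v + 1) + v + 1) \<le> 2 * real k ^ 2 + 2 * real k * n + n"
    using a unfolding n_def .
  show ?thesis unfolding n_def[symmetric] Q_def[symmetric] eq using a' b1 b2 k1(1) by linarith
qed

lemma rho_theta_bound:
  fixes v :: complex
  assumes v: "Re v \<ge> -1" and k: "k \<ge> 2"
  shows "norm (rho v N k * (1 - (v + of_nat k) / (of_nat k + 1) * ((of_nat N - of_nat k) / (v + of_nat N + 1 + of_nat k))))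
     \<le> (norm (1 - v) + 3 * (2 + 3 * norm (v + 1))) / (real k - 1)"
proof (cases "k \<le> N")
  case False
  hence "rho v N k = 0" by (intro rho_zero) simp
  thus ?thesis using k by simp
next
  case True
  define G where "G = 2 + 3 * norm (v + 1)"
  define D where "D = v + of_nat N + 1 + of_nat k"
  define nr where "nr = norm (rho v N k)"
  define K1 where "K1 = real k + 1"
  define x where "x = real k - 1"
  have x0: "x > 0" using k by (simp add: x_def)
  have K0: "K1 > 0" by (simp add: K1_def)
  have xK: "x \<le> K1" by (simp add: x_def K1_def)
  have Npos: "real N > 0" using True k by simp
  have nD: "norm D \<ge> real N" using norm_re_ge[of v N k] v unfolding D_def by linarith
  have nDpos: "norm D > 0" using nD Npos by linarith
  have D0: "D \<noteq> 0" using nDpos by auto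
  have nr1: "nr \<le> 1" unfolding nr_def by (rule rho_le1[OF v])
  have nr0: "nr \<ge> 0" unfolding nr_def by simp
  have dec: "nr * K1 / real N \<le> 3 / x"
    using rho_decay[OF v k, of N] unfolding nr_def K1_def x_def by simp
  have G0: "G \<ge> 0" unfolding G_def by simp
  have num: "norm (of_nat N * (1 - v) + (2 * (of_nat k)^2 + 2 * of_nat k * (v + 1) + v + 1)) \<le> real N * norm (1 - v) + G * K1^2"
  proof -
    have "norm (of_nat N * (1 - v) + (2 * (of_nat k)^2 + 2 * of_nat k * (v + 1) + v + 1)) \<le>
        norm (of_nat N * (1 - v)) + norm (2 * (of_nat k)^2 + 2 * of_nat k * (v + 1) + v + 1 :: complex)"
      by (rule norm_triangle_ineq)
    also have "\<dots> \<le> real N * norm (1 - v) + G * K1^2"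
      using P_bound[of k v] unfolding G_def K1_def by (simp add: norm_mult)
    finally show ?thesis .
  qed
  have th: "1 - (v + of_nat k) / (of_nat k + 1) * ((of_nat N - of_nat k) / (v + of_nat N + 1 + of_nat k)) =
      (of_nat N * (1 - v) + (2 * (of_nat k)^2 + 2 * of_nat k * (v + 1) + v + 1)) / ((of_nat k + 1) * D)"
  proof -
    have k0: "(of_nat k + 1 :: complex) \<noteq> 0" by (metis add.commute of_nat_Suc of_nat_neq_0)
    show ?thesis unfolding D_def by (rule theta_alg) (use D0 k0 in \<open>simp_all add: D_def\<close>)
  qed
  have nk: "norm ((of_nat k + 1) :: complex) = K1" unfolding K1_def
    by (metis norm_of_nat of_nat_Suc add.commute of_nat_1 of_nat_add)
  have "norm (rho v N k * (1 - (v + of_nat k) / (of_nat k + 1) * ((of_nat N - of_nat k) / (v + of_nat N + 1 + of_nat k))))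
      = nr * norm (of_nat N * (1 - v) + (2 * (of_nat k)^2 + 2 * of_nat k * (v + 1) + v + 1)) / (K1 * norm D)"
    unfolding th nr_def by (simp add: norm_mult norm_divide nk)
  also have "\<dots> \<le> nr * (real N * norm (1 - v) + G * K1^2) / (K1 * norm D)"
    using num nr0 K0 nDpos by (intro divide_right_mono mult_left_mono) auto
  also have "\<dots> = (nr * real N / norm D) * norm (1 - v) / K1 + G * (nr * K1 / norm D)"
    using K0 nDpos by (simp add: field_simps power2_eq_square)
  also have "\<dots> \<le> 1 * norm (1 - v) / x + G * (3 / x)"
  proof (intro add_mono mult_left_mono)
    have a1: "nr * real N / norm D \<le> 1"
    proof -
      have "nr * real N \<le> 1 * norm D" using nr1 nr0 nD Npos by (intro mult_mono) auto
      thus ?thesis using nDpos by (simp add: divide_le_eq)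
    qed
    have "(nr * real N / norm D) * norm (1 - v) / K1 \<le> 1 * norm (1 - v) / K1"
      using a1 K0 by (intro divide_right_mono mult_right_mono) auto
    also have "\<dots> \<le> 1 * norm (1 - v) / x" using x0 xK by (intro divide_left_mono) auto
    finally show "(nr * real N / norm D) * norm (1 - v) / K1 \<le> 1 * norm (1 - v) / x" .
    have "nr * K1 / norm D \<le> nr * K1 / real N"
      using nD Npos nr0 K0 nDpos by (intro divide_left_mono mult_pos_pos) auto
    thus "nr * K1 / norm D \<le> 3 / x" using dec by linarith
  qed (use G0 in auto)
  also have "\<dots> = (norm (1 - v) + 3 * (2 + 3 * norm (v + 1))) / (real k - 1)"
    unfolding G_def x_def by (simp add: add_divide_distrib algebra_simps)
  finally show ?thesis .
qed

lemma c_ident: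
  "uu v k * rho v N k * K0 + uu v (Suc k) * rho v N (Suc k) * K1 =
   uu v k * (rho v N k * (K0 - K1) + rho v N k * (1 - (v + of_nat k) / (of_nat k + 1) * ((of_nat N - of_nat k) / (v + of_nat N + 1 + of_nat k))) * K1)"
proof -
  have c_alg: "\<And>u r K0 K1 A q2 :: complex. u * r * K0 + (u * (- A)) * (r * q2) * K1 = u * (r * (K0 - K1) + r * (1 - A * q2) * K1)"
    by (simp add: algebra_simps)
  show ?thesis unfolding uu_Suc rho_Suc minus_divide_left[symmetric] by (rule c_alg)
qed

lemma caseB:
  fixes s t r w v :: complex
  assumes st: "s + t = v" and rw: "r + w = v" and v: "v \<notin> \<int>\<^sub>\<le>\<^sub>0"
    and s: "\<And>k. s + of_nat k \<noteq> 0" and t: "\<And>k. t + of_nat k \<noteq> 0"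
    and r: "\<And>k. r + of_nat k \<noteq> 0" and w: "\<And>k. w + of_nat k \<noteq> 0"
    and ReB: "Re v \<ge> 2" and Re4: "Re v < 4"
  shows "(\<lambda>j. uu v j * KK s t r w j) sums ((Gamma s * Gamma t - Gamma r * Gamma w) * rGamma v)"
proof -
  have vm1: "Re v \<ge> -1" using ReB by simp
  obtain Mu where Mu: "\<And>j. j \<ge> 2 \<Longrightarrow> norm (uu v j) \<le> Mu * (real j - 1) powr (Re v - 1)"
    using uu_bound[of v] by blast
  obtain C j1 where j1: "j1 \<ge> 3" and
    C: "\<And>j. j \<ge> j1 \<Longrightarrow> norm (KK s t r w j) \<le> C / (real j - 1)^3 \<and>
            norm (KK s t r w (Suc j)) \<le> C / (real j - 1)^3 \<and>
            norm (KK s t r w j - KK s t r w (Suc j)) \<le> C / (real j - 1)^4"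
    using KK_bounds[OF st rw s t r w] by blast
  define E where "E = norm (1 - v) + 3 * (2 + 3 * norm (v + 1))"
  define R where "R = (Gamma s * Gamma t - Gamma r * Gamma w) * rGamma v"
  define a where "a = (\<lambda>k N. uu v k * rho v N k * KK s t r w k)"
  define b where "b = (\<lambda>k. uu v k * KK s t r w k)"
  define c where "c = (\<lambda>k N. a k N + a (Suc k) N)"
  define M where "M = (\<lambda>k::nat. Mu * C * (1 + E) * (real k - 1) powr (Re v - 5))"
  have lim: "(\<lambda>N. c k N) \<longlonglongrightarrow> b k + b (Suc k)" for k
  proof -
    have "(\<lambda>N. uu v k * rho v N k * KK s t r w k + uu v (Suc k) * rho v N (Suc k) * KK s t r w (Suc k))
       \<longlonglongrightarrow> uu v k * 1 * KK s t r w k + uu v (Suc k) * 1 * KK s t r w (Suc k)"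
      by (intro tendsto_intros rho_lim)
    thus ?thesis by (simp add: c_def a_def b_def)
  qed
  have bound: "norm (c k N) \<le> M k" if k: "k \<ge> j1" for k N
  proof -
    define x where "x = real k - 1"
    have x0: "x > 0" using k j1 unfolding x_def by simp
    have k2: "k \<ge> 2" using k j1 by simp
    have u: "norm (uu v k) \<le> Mu * x powr (Re v - 1)" unfolding x_def by (rule Mu[OF k2])
    have u0: "Mu * x powr (Re v - 1) \<ge> 0" using u norm_ge_zero[of "uu v k"] by linarith
    note Ck = C[OF k]
    have r1: "norm (rho v N k) \<le> 1" by (rule rho_le1[OF vm1])
    have th: "norm (rho v N k * (1 - (v + of_nat k) / (of_nat k + 1) * ((of_nat N - of_nat k) / (v + of_nat N + 1 + of_nat k)))) \<le> E / x"
      unfolding E_def x_def by (rule rho_theta_bound[OF vm1 k2])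
    have C0: "C / x^3 \<ge> 0" using Ck norm_ge_zero[of "KK s t r w k"] unfolding x_def by linarith
    have C1: "C \<ge> 0" using C0 x0 by (simp add: zero_le_divide_iff)
    have E0: "E \<ge> 0" unfolding E_def by simp
    have "norm (c k N) = norm (uu v k) * norm (rho v N k * (KK s t r w k - KK s t r w (Suc k)) +
         rho v N k * (1 - (v + of_nat k) / (of_nat k + 1) * ((of_nat N - of_nat k) / (v + of_nat N + 1 + of_nat k))) * KK s t r w (Suc k))"
      unfolding c_def a_def c_ident norm_mult ..
    also have "\<dots> \<le> (Mu * x powr (Re v - 1)) * (1 * (C / x^4) + (E / x) * (C / x^3))"
    proof (rule mult_mono[OF u _ u0 norm_ge_zero])
      have "norm (rho v N k * (KK s t r w k - KK s t r w (Suc k)) +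
         rho v N k * (1 - (v + of_nat k) / (of_nat k + 1) * ((of_nat N - of_nat k) / (v + of_nat N + 1 + of_nat k))) * KK s t r w (Suc k))
         \<le> norm (rho v N k) * norm (KK s t r w k - KK s t r w (Suc k)) +
           norm (rho v N k * (1 - (v + of_nat k) / (of_nat k + 1) * ((of_nat N - of_nat k) / (v + of_nat N + 1 + of_nat k)))) * norm (KK s t r w (Suc k))"
        by (rule order_trans[OF norm_triangle_ineq]) (simp add: norm_mult)
      also have "\<dots> \<le> 1 * (C / x^4) + (E / x) * (C / x^3)"
        using r1 th Ck x0 E0 C1 unfolding x_def by (intro add_mono mult_mono) auto
      finally show "norm (rho v N k * (KK s t r w k - KK s t r w (Suc k)) +
         rho v N k * (1 - (v + of_nat k) / (of_nat k + 1) * ((of_nat N - of_nat k) / (v + of_nat N + 1 + of_nat k))) * KK s t r w (Suc k))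
         \<le> 1 * (C / x^4) + (E / x) * (C / x^3)" .
    qed
    also have "\<dots> = Mu * C * (1 + E) * (x powr (Re v - 1) / x^4)"
    proof -
      have h: "x * x^3 = x^4" by (simp add: numeral_eq_Suc)
      have "(E/x)*(C/x^3) = E*C/x^4" using h by (metis times_divide_times_eq)
      hence "1*(C/x^4) + (E/x)*(C/x^3) = C*(1+E)/x^4" by (simp add: add_divide_distrib algebra_simps)
      thus ?thesis using h by (simp add: add_divide_distrib algebra_simps)
    qed
    also have "\<dots> = M k" unfolding M_def x_def[symmetric] using x0 by (simp add: powr_div_pow)
    finally show ?thesis .
  qed
  have ev: "eventually (\<lambda>(k, N). norm (c k N) \<le> M k) (at_top \<times>\<^sub>F sequentially)"
    unfolding eventually_prod_sequentially
    by (rule exI[of _ j1]) (auto intro!: bound)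
  have sM: "summable M" unfolding M_def using Re4 by (intro summable_shifted_powr) simp
  have T: "((\<lambda>N. suminf (\<lambda>k. c k N)) \<longlongrightarrow> suminf (\<lambda>k. b k + b (Suc k))) sequentially"
    and sb: "summable (\<lambda>n. norm (b n + b (Suc n)))"
    using tannerys_theorem[OF lim ev sM] by auto
  define S where "S = (\<lambda>N. \<Sum>j\<le>N. uu v j * rho v N j * KK s t r w j)"
  have a0: "a 0 N = b 0" for N by (simp add: a_def b_def)
  have "suminf (\<lambda>k. c k N) = 2 * S N - b 0" for N
  proof -
    have s1: "(\<lambda>k. a k N) sums S N" unfolding a_def S_def by (rule a_sum_fin)
    have s2: "(\<lambda>k. a (Suc k) N) sums (S N - a 0 N)"
      by (subst sums_Suc_iff) (use s1 in simp)
    have "(\<lambda>k. c k N) sums (S N + (S N - a 0 N))" unfolding c_def by (rule sums_add[OF s1 s2])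
    thus ?thesis using a0 by (simp add: sums_iff)
  qed
  with T have T2: "(\<lambda>N. 2 * S N - b 0) \<longlonglongrightarrow> suminf (\<lambda>k. b k + b (Suc k))" by simp
  have "(\<lambda>N. 2 * S N - b 0) \<longlonglongrightarrow> 2 * R - b 0"
    unfolding S_def R_def by (intro tendsto_intros fin_lim[OF st rw v s t r w])
  hence q: "suminf (\<lambda>k. b k + b (Suc k)) = 2 * R - b 0" using T2 LIMSEQ_unique by blast
  have sbb: "summable (\<lambda>k. b k + b (Suc k))" using sb by (rule summable_norm_cancel)
  have qs: "(\<lambda>n. \<Sum>k<n. b k + b (Suc k)) \<longlonglongrightarrow> 2 * R - b 0"
    using sbb q by (metis summable_sums sums_def)
  have b0: "b \<longlonglongrightarrow> 0"
  proof (rule Lim_null_comparison)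
    show "eventually (\<lambda>n. norm (b n) \<le> Mu * C * (real n - 1) powr (Re v - 4)) sequentially"
      using eventually_ge_at_top[of j1]
    proof eventually_elim
      case (elim n)
      define x where "x = real n - 1"
      have x0: "x > 0" using elim j1 unfolding x_def by simp
      have u: "norm (uu v n) \<le> Mu * x powr (Re v - 1)" unfolding x_def by (rule Mu) (use elim j1 in simp)
      have u0: "Mu * x powr (Re v - 1) \<ge> 0" using u norm_ge_zero[of "uu v n"] by linarith
      have "norm (b n) = norm (uu v n) * norm (KK s t r w n)" by (simp add: b_def norm_mult)
      also have "\<dots> \<le> (Mu * x powr (Re v - 1)) * (C / x^3)"
        using u C[OF elim] u0 unfolding x_def by (intro mult_mono) auto
      also have "\<dots> = Mu * C * (x powr (Re v - 1) / x^3)" by simp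
      also have "\<dots> = Mu * C * (real n - 1) powr (Re v - 4)" unfolding x_def[symmetric] using x0 by (simp add: powr_div_pow)
      finally show ?case .
    qed
    have f: "filterlim (\<lambda>n. -1 + real n) at_top sequentially"
      by (rule filterlim_tendsto_add_at_top[OF tendsto_const filterlim_real_sequentially])
    have "((\<lambda>n. (real n - 1) powr (Re v - 4)) \<longlongrightarrow> 0) sequentially"
      using tendsto_neg_powr[of "Re v - 4", OF _ f] Re4 by simp
    thus "((\<lambda>n. Mu * C * (real n - 1) powr (Re v - 4)) \<longlongrightarrow> 0) sequentially"
      by (intro tendsto_mult_right_zero)
  qed
  have ps: "(\<Sum>k<n. b k) = ((\<Sum>k<n. b k + b (Suc k)) + b 0 - b n) / 2" for n
  proof -
    have "(\<Sum>k<n. b k + b (Suc k)) = (\<Sum>k<n. b k) + (\<Sum>k<n. b (Suc k))" by (rule sum.distrib)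
    moreover have "(\<Sum>k<Suc n. b k) = b 0 + (\<Sum>k<n. b (Suc k))" by (rule sum.lessThan_Suc_shift)
    moreover have "(\<Sum>k<Suc n. b k) = (\<Sum>k<n. b k) + b n" by simp
    ultimately show ?thesis by (simp add: field_simps)
  qed
  have "(\<lambda>n. ((\<Sum>k<n. b k + b (Suc k)) + b 0 - b n) / 2) \<longlonglongrightarrow> ((2 * R - b 0) + b 0 - 0) / 2"
    by (intro tendsto_intros qs b0) simp_all
  hence "(\<lambda>n. \<Sum>k<n. b k) \<longlonglongrightarrow> R" unfolding ps by simp
  thus ?thesis unfolding sums_def b_def R_def .
qed

lemma uu_neg_nat: "uu (- of_nat m) j = of_nat (m choose j)"
  unfolding uu_def binomial_gbinomial gbinomial_pochhammer by simp

lemma pair_zero: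
  fixes s t :: complex
  assumes st: "s + t = - of_nat m" and s: "\<And>k. s + of_nat k \<noteq> 0"
  shows "(\<Sum>j\<le>m. of_nat (m choose j) * (1/(s + of_nat j) + 1/(t + of_nat j))) = 0"
proof -
  have "(\<Sum>j\<le>m. of_nat (m choose j) / (t + of_nat j)) = (\<Sum>j\<in>{0..m}. of_nat (m choose (m + 0 - j)) / (t + of_nat (m + 0 - j)))"
    unfolding atLeast0AtMost[symmetric] by (rule sum.atLeastAtMost_rev)
  also have "\<dots> = (\<Sum>j\<in>{0..m}. - (of_nat (m choose j) / (s + of_nat j)))"
  proof (rule sum.cong[OF refl])
    fix j assume j: "j \<in> {0..m}"
    have c: "m choose (m + 0 - j) = m choose j" using j by (simp add: binomial_symmetric[symmetric])
    have eq: "t + of_nat (m + 0 - j) = - (s + of_nat j)"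
    proof -
      have "t = (s + t) - s" by simp
      hence tt: "t = - of_nat m - s" unfolding st .
      have jm: "j \<le> m" using j by simp
      show ?thesis by (subst tt) (simp add: of_nat_diff jm algebra_simps)
    qed
    show "of_nat (m choose (m + 0 - j)) / (t + of_nat (m + 0 - j)) = - (of_nat (m choose j) / (s + of_nat j))"
      unfolding c eq divide_minus_right ..
  qed
  also have "\<dots> = - (\<Sum>j\<le>m. of_nat (m choose j) / (s + of_nat j))"
    by (simp add: sum_negf atLeast0AtMost)
  finally have "(\<Sum>j\<le>m. of_nat (m choose j) / (t + of_nat j)) = - (\<Sum>j\<le>m. of_nat (m choose j) / (s + of_nat j))" .
  thus ?thesis by (simp add: distrib_left sum.distrib)
qed

lemma caseZ:
  fixes s t r w :: complex
  assumes st: "s + t = - of_nat m" and rw: "r + w = - of_nat m"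
    and s: "\<And>k. s + of_nat k \<noteq> 0" and r: "\<And>k. r + of_nat k \<noteq> 0"
  shows "(\<lambda>j. uu (- of_nat m) j * KK s t r w j) sums 0"
proof -
  have "(\<lambda>j. uu (- of_nat m) j * KK s t r w j) sums (\<Sum>j\<in>{..m}. uu (- of_nat m) j * KK s t r w j)"
    by (rule sums_finite) (auto simp: uu_def pochhammer_of_nat_eq_0_lemma)
  also have "(\<Sum>j\<in>{..m}. uu (- of_nat m) j * KK s t r w j) =
     (\<Sum>j\<le>m. of_nat (m choose j) * (1/(s + of_nat j) + 1/(t + of_nat j))) -
     (\<Sum>j\<le>m. of_nat (m choose j) * (1/(r + of_nat j) + 1/(w + of_nat j)))"
    unfolding uu_neg_nat KK_def sum_subtractf[symmetric] by (rule sum.cong) (simp_all add: algebra_simps)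
  also have "\<dots> = 0" using pair_zero[OF st s] pair_zero[OF rw r] by simp
  finally show ?thesis .
qed

lemma main_R:
  fixes s t r w v :: complex
  assumes st: "s + t = v" and rw: "r + w = v" and Re4: "Re v < 4"
    and s: "\<And>k. s + of_nat k \<noteq> 0" and t: "\<And>k. t + of_nat k \<noteq> 0"
    and r: "\<And>k. r + of_nat k \<noteq> 0" and w: "\<And>k. w + of_nat k \<noteq> 0"
  shows "(\<lambda>j. uu v j * KK s t r w j) sums ((Gamma s * Gamma t - Gamma r * Gamma w) * rGamma v)"
proof (cases "v \<in> \<int>\<^sub>\<le>\<^sub>0")
  case True
  then obtain m where m: "v = - of_nat m" by (elim nonpos_Ints_cases')
  have "rGamma v = 0" using True by (simp add: rGamma_eq_zero_iff)
  thus ?thesis using caseZ[of s t m r w] st rw s r m by simp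
next
  case False
  show ?thesis
  proof (cases "Re v < 3")
    case True
    show ?thesis by (rule caseA[OF st rw False s t r w True])
  next
    case False2: False
    show ?thesis by (rule caseB[OF st rw False s t r w _ Re4]) (use False2 in simp)
  qed
qed

lemma poch_ratio:
  fixes z :: complex
  assumes "\<And>i. z + of_nat i \<noteq> 0"
  shows "pochhammer z n / pochhammer (1 + z) n = z / (z + of_nat n)"
    and "pochhammer (1 + z) n / pochhammer z n = (z + of_nat n) / z"
proof -
  have e: "pochhammer z n * (z + of_nat n) = z * pochhammer (1 + z) n"
    using pochhammer_Suc[of z n] pochhammer_rec[of z n] by (simp add: add.commute)
  have p1: "pochhammer (1 + z) n \<noteq> 0"
  proof
    assume "pochhammer (1 + z) n = 0"
    then obtain k where "1 + z = - of_nat k" by (auto simp: pochhammer_eq_0_iff)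
    hence "z + of_nat (Suc k) = 0" by (simp add: algebra_simps eq_neg_iff_add_eq_0)
    with assms show False by blast
  qed
  have p0: "pochhammer z n \<noteq> 0"
  proof
    assume "pochhammer z n = 0"
    then obtain k where "z = - of_nat k" by (auto simp: pochhammer_eq_0_iff)
    hence "z + of_nat k = 0" by simp
    with assms show False by blast
  qed
  have z0: "z \<noteq> 0" using assms[of 0] by simp
  have zn: "z + of_nat n \<noteq> 0" by (rule assms)
  show "pochhammer z n / pochhammer (1 + z) n = z / (z + of_nat n)"
    using e p0 p1 z0 zn by (simp add: field_simps)
  show "pochhammer (1 + z) n / pochhammer z n = (z + of_nat n) / z"
    using e p0 p1 z0 zn by (simp add: field_simps)
qed

lemma rearr:
  fixes x1 x2 x3 x4 x5 x6 y2 y3 y4 y5 y6 sg f :: complex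
  shows "x1 * (x2 * (x3 * (x4 * (x5 * x6)))) / (y2 * (y3 * (y4 * (y5 * y6)))) * sg / f =
     (sg * x1 / f) * ((x2 / y2) * (x3 / y3) * (x4 / y4) * (x5 / y5) * (x6 / y6))"
  by (simp add: divide_inverse mult_ac)

lemma nz_from:
  fixes z :: complex
  assumes "z \<noteq> 0" "1 + z \<notin> \<int>\<^sub>\<le>\<^sub>0"
  shows "z + of_nat i \<noteq> 0"
proof (cases i)
  case 0 thus ?thesis using assms by simp
next
  case (Suc k)
  have "1 + z + of_nat k \<noteq> 0" by (rule np_ne[OF assms(2)])
  thus ?thesis using Suc by (simp add: algebra_simps)
qed

lemma final_alg:
  fixes v a b c X :: complex
  assumes nz: "v \<noteq> 0" "a \<noteq> 0" "b \<noteq> 0" "c \<noteq> 0"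
  defines "s3 \<equiv> v/2 - a/(2*c) - b/(2*c)" and "s4 \<equiv> v/2 - a/(2*c) + b/(2*c)"
    and "s5 \<equiv> v/2 + a/(2*c) + b/(2*c)" and "s6 \<equiv> v/2 + a/(2*c) - b/(2*c)"
  assumes n3: "s3 + X \<noteq> 0" and n4: "s4 + X \<noteq> 0" and n5: "s5 + X \<noteq> 0" and n6: "s6 + X \<noteq> 0"
  shows "(v/2 + X) / (v/2) * (s3 / (s3 + X)) * (s5 / (s5 + X)) * (s4 / (s4 + X)) * (s6 / (s6 + X)) =
    (v * c - a - b) * (v * c + a + b) * (v * c - a + b) * (v * c + a - b) / (16 * v * a * b * c^2) *
    (1/(s5 + X) + 1/(s3 + X) - 1/(s6 + X) - 1/(s4 + X))"
proof -
  define AA where "AA = a/(2*c)"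
  define BB where "BB = b/(2*c)"
  have a: "a = 2*c*AA" and b: "b = 2*c*BB" using nz by (simp_all add: AA_def BB_def)
  have A0: "AA \<noteq> 0" "BB \<noteq> 0" using nz a b by auto
  have s: "s3 = v/2 - AA - BB" "s4 = v/2 - AA + BB" "s5 = v/2 + AA + BB" "s6 = v/2 + AA - BB"
    by (simp_all add: s3_def s4_def s5_def s6_def AA_def BB_def)
  have P: "(v * c - a - b) * (v * c + a + b) * (v * c - a + b) * (v * c + a - b) / (16 * v * a * b * c^2)
      = s3 * s5 * s4 * s6 / (4 * v * AA * BB)"
    unfolding s a b using nz A0 by (simp add: field_simps) (simp add: algebra_simps power2_eq_square)
  have gen: "\<And>p q r w :: complex. p \<noteq> 0 \<Longrightarrow> q \<noteq> 0 \<Longrightarrow> r \<noteq> 0 \<Longrightarrow> w \<noteq> 0 \<Longrightarrow>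
      1/p + 1/q - 1/r - 1/w = ((p+q) * (r*w) - (r+w)*(p*q))/(p*q*r*w)"
    by (simp add: field_simps)
  have e1: "(s5 + X + (s3 + X)) * ((s6 + X) * (s4 + X)) - (s6 + X + (s4 + X)) * ((s5 + X) * (s3 + X)) = (v + 2*X) * (4 * AA * BB)"
    unfolding s by (simp add: field_simps) (simp add: algebra_simps)?
  have K: "1/(s5 + X) + 1/(s3 + X) - 1/(s6 + X) - 1/(s4 + X) = (v + 2*X) * (4 * AA * BB) / ((s5+X)*(s3+X)*(s6+X)*(s4+X))"
    using gen[OF n5 n3 n6 n4] e1 by simp
  have L: "(v/2 + X)/(v/2) = (v + 2*X)/v" using nz by (simp add: field_simps)
  have gen2: "\<And>Y a3 a4 a5 a6 p q r w :: complex. p \<noteq> 0 \<Longrightarrow> q \<noteq> 0 \<Longrightarrow> r \<noteq> 0 \<Longrightarrow> w \<noteq> 0 \<Longrightarrow>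
     (Y/v) * (a3/q) * (a5/p) * (a4/w) * (a6/r) = a3 * a5 * a4 * a6 / (4 * v * AA * BB) * (Y * (4 * AA * BB) / (p * q * r * w))"
    using nz A0 by (simp add: field_simps)
  show ?thesis unfolding P K L by (rule gen2[OF n5 n3 n6 n4])
qed

theorem mainTheorem1:
  fixes v a b c :: complex
  assumes "a \<noteq> 0" "b \<noteq> 0" "Re v < 4" "Re c > 0"
    and "Re (v * c + a + b) > 0" "Re (v * c + a - b) > 0"
    and "Re (v * c - a + b) > 0" "Re (v * c - a - b) > 0"
    and "v/2 \<notin> \<int>\<^sub>\<le>\<^sub>0"
    and "1 + (v/2 - a/(2*c) - b/(2*c)) \<notin> \<int>\<^sub>\<le>\<^sub>0"
    and "1 + (v/2 - a/(2*c) + b/(2*c)) \<notin> \<int>\<^sub>\<le>\<^sub>0"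
    and "1 + (v/2 + a/(2*c) + b/(2*c)) \<notin> \<int>\<^sub>\<le>\<^sub>0"
    and "1 + (v/2 + a/(2*c) - b/(2*c)) \<notin> \<int>\<^sub>\<le>\<^sub>0"
  shows "let s3 = v/2 - a/(2*c) - b/(2*c); s4 = v/2 - a/(2*c) + b/(2*c);
             s5 = v/2 + a/(2*c) + b/(2*c); s6 = v/2 + a/(2*c) - b/(2*c);
             P = (v * c - a - b) * (v * c + a + b) * (v * c - a + b) * (v * c + a - b)
         in summable (hyp_term [v, 1 + v/2, s3, s5, s4, s6] [v/2, 1 + s3, 1 + s5, 1 + s4, 1 + s6] (-1))
            \<and> hypergeom [v, 1 + v/2, s3, s5, s4, s6] [v/2, 1 + s3, 1 + s5, 1 + s4, 1 + s6] (-1)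
              = P / (16 * v * a * b * c^2 * Gamma v) * (Gamma s5 * Gamma s3 - Gamma s6 * Gamma s4)"
proof -
  define s3 where "s3 = v/2 - a/(2*c) - b/(2*c)"
  define s4 where "s4 = v/2 - a/(2*c) + b/(2*c)"
  define s5 where "s5 = v/2 + a/(2*c) + b/(2*c)"
  define s6 where "s6 = v/2 + a/(2*c) - b/(2*c)"
  define P where "P = (v * c - a - b) * (v * c + a + b) * (v * c - a + b) * (v * c + a - b)"
  define Cst where "Cst = P / (16 * v * a * b * c^2)"
  have c0: "c \<noteq> 0" using assms(4) by auto
  have v0: "v \<noteq> 0" using assms(9) by auto
  have e3: "v * c - a - b = 2 * c * s3" using c0 by (simp add: s3_def field_simps)
  have e4: "v * c - a + b = 2 * c * s4" using c0 by (simp add: s4_def field_simps)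
  have e5: "v * c + a + b = 2 * c * s5" using c0 by (simp add: s5_def field_simps)
  have e6: "v * c + a - b = 2 * c * s6" using c0 by (simp add: s6_def field_simps)
  have z3: "s3 \<noteq> 0" using assms(8) e3 by auto
  have z4: "s4 \<noteq> 0" using assms(7) e4 by auto
  have z5: "s5 \<noteq> 0" using assms(5) e5 by auto
  have z6: "s6 \<noteq> 0" using assms(6) e6 by auto
  have n3: "\<And>i. s3 + of_nat i \<noteq> 0" by (rule nz_from[OF z3]) (use assms(10) in \<open>simp add: s3_def\<close>)
  have n4: "\<And>i. s4 + of_nat i \<noteq> 0" by (rule nz_from[OF z4]) (use assms(11) in \<open>simp add: s4_def\<close>)
  have n5: "\<And>i. s5 + of_nat i \<noteq> 0" by (rule nz_from[OF z5]) (use assms(12) in \<open>simp add: s5_def\<close>)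
  have n6: "\<And>i. s6 + of_nat i \<noteq> 0" by (rule nz_from[OF z6]) (use assms(13) in \<open>simp add: s6_def\<close>)
  have nv: "\<And>i. v/2 + of_nat i \<noteq> 0" using np_ne[OF assms(9)] by simp
  have sum1: "s5 + s3 = v" by (simp add: s5_def s3_def)
  have sum2: "s6 + s4 = v" by (simp add: s6_def s4_def)
  have R: "(\<lambda>j. uu v j * KK s5 s3 s6 s4 j) sums ((Gamma s5 * Gamma s3 - Gamma s6 * Gamma s4) * rGamma v)"
    by (rule main_R[OF sum1 sum2 assms(3) n5 n3 n6 n4])
  have H: "hyp_term [v, 1 + v/2, s3, s5, s4, s6] [v/2, 1 + s3, 1 + s5, 1 + s4, 1 + s6] (-1) n
      = Cst * (uu v n * KK s5 s3 s6 s4 n)" for n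
  proof -
    have "hyp_term [v, 1 + v/2, s3, s5, s4, s6] [v/2, 1 + s3, 1 + s5, 1 + s4, 1 + s6] (-1) n =
      ((-1)^n * pochhammer v n / fact n) * ((pochhammer (1 + v/2) n / pochhammer (v/2) n) *
        (pochhammer s3 n / pochhammer (1 + s3) n) * (pochhammer s5 n / pochhammer (1 + s5) n) *
        (pochhammer s4 n / pochhammer (1 + s4) n) * (pochhammer s6 n / pochhammer (1 + s6) n))"
      unfolding hyp_term_def
      by (simp only: list.map prod_list.Cons prod_list.Nil mult_1_right of_nat_fact) (rule rearr)
    also have "\<dots> = uu v n * ((v/2 + of_nat n) / (v/2) * (s3 / (s3 + of_nat n)) * (s5 / (s5 + of_nat n)) *
        (s4 / (s4 + of_nat n)) * (s6 / (s6 + of_nat n)))"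
      unfolding uu_def poch_ratio(1)[OF n3] poch_ratio(1)[OF n4] poch_ratio(1)[OF n5] poch_ratio(1)[OF n6]
        poch_ratio(2)[OF nv] ..
    also have "\<dots> = uu v n * (Cst * KK s5 s3 s6 s4 n)"
    proof -
      have "(v/2 + of_nat n) / (v/2) * (s3 / (s3 + of_nat n)) * (s5 / (s5 + of_nat n)) *
        (s4 / (s4 + of_nat n)) * (s6 / (s6 + of_nat n)) = Cst * KK s5 s3 s6 s4 n"
        unfolding Cst_def P_def KK_def s3_def s4_def s5_def s6_def
        by (rule final_alg[OF v0 assms(1,2) c0]) (use n3 n4 n5 n6 in \<open>simp_all only: s3_def s4_def s5_def s6_def not_False_eq_True\<close>)
      thus ?thesis by simp
    qed
    finally show ?thesis by simp
  qed
  have S0: "(\<lambda>n. Cst * (uu v n * KK s5 s3 s6 s4 n)) sums (Cst * ((Gamma s5 * Gamma s3 - Gamma s6 * Gamma s4) * rGamma v))"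
    by (rule sums_mult[OF R])
  have HH: "hyp_term [v, 1 + v/2, s3, s5, s4, s6] [v/2, 1 + s3, 1 + s5, 1 + s4, 1 + s6] (-1) = (\<lambda>n. Cst * (uu v n * KK s5 s3 s6 s4 n))"
    by (rule ext) (rule H)
  have S: "(hyp_term [v, 1 + v/2, s3, s5, s4, s6] [v/2, 1 + s3, 1 + s5, 1 + s4, 1 + s6] (-1)) sums
      (Cst * ((Gamma s5 * Gamma s3 - Gamma s6 * Gamma s4) * rGamma v))"
    unfolding HH by (rule S0)
  have rhs: "Cst * ((Gamma s5 * Gamma s3 - Gamma s6 * Gamma s4) * rGamma v) =
      P / (16 * v * a * b * c^2 * Gamma v) * (Gamma s5 * Gamma s3 - Gamma s6 * Gamma s4)"
    unfolding Cst_def rGamma_inverse_Gamma divide_inverse inverse_mult_distrib by (simp only: mult_ac)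
  have m1: "summable (hyp_term [v, 1 + v/2, s3, s5, s4, s6] [v/2, 1 + s3, 1 + s5, 1 + s4, 1 + s6] (-1))"
    using S by (rule sums_summable)
  have m2: "hypergeom [v, 1 + v/2, s3, s5, s4, s6] [v/2, 1 + s3, 1 + s5, 1 + s4, 1 + s6] (-1)
        = P / (16 * v * a * b * c^2 * Gamma v) * (Gamma s5 * Gamma s3 - Gamma s6 * Gamma s4)"
    unfolding hypergeom_def rhs[symmetric] using S by (rule sums_unique[symmetric])
  show ?thesis unfolding Let_def s3_def[symmetric] s4_def[symmetric] s5_def[symmetric] s6_def[symmetric] P_def[symmetric]
    using m1 m2 by (rule conjI)
qed

end
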